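(* Let $S$ be either $\mathcal{PI}^{\ast}_X$ or $\overline{\mathcal{PI}^{\ast}}_X$ and let $a,b\in S$. Then: (1) $a\mathcal{R}b$ iff $\mathrm{dom}(a)=\mathrm{dom}(b)$; (2) $a\mathcal{L}b$ iff $\mathrm{ran}(a)=\mathrm{ran}(b)$; (3) $a\mathcal{D}b$ iff $a\mathcal{J}b$ iff $\mathrm{rank}(a)=\mathrm{rank}(b)$; (4) every ideal of $S$ has the form $J_\xi=\{\alpha\in S:\mathrm{rank}(\alpha)<\xi\}$ for some cardinal $\xi\le |X|^{+}$, where $|X|^{+}$ is the successor cardinal of $|X|$.
   Context: Let $X$ be a set and $X'=\{x':x\in X\}$ a disjoint copy of $X$. Let $P_X$ be the set of all partitions of $X\cup X'$ each of whose blocks is either a singleton (a point) or a generalised line, i.e. a subset meeting both $X$ and $X'$. Write $\alpha=\{A_i\cup B_i'\}_{i\in I}$ for the element whose generalised lines are the $A_i\cup B_i'$ ($A_i,B_i\subseteq X$ nonempty, the $A_i$ pairwise disjoint, the $B_i$ pairwise disjoint), all other elements being points. Set $\mathrm{rank}(\alpha)=|I|$, $\mathrm{dom}(\alpha)$ = the partition $\{A_i\}_{i\in I}$ of $\bigcup_i A_i$, and $\mathrm{ran}(\alpha)$ = the partition $\{B_i'\}_{i\in I}$ of $\bigcup_i B_i'$. Product $\star$: with $X''$ a third copy of $X$, regard $\alpha$ as a partition of $X\cup X''$ and $\beta$ as a partition of $X''\cup X'$ (identifying the bottom copy of $\alpha$ with the top copy of $\beta$ via $X''$), let $\sim$ be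 the equivalence relation on $X\cup X''\cup X'$ generated by the blocks of both; $\alpha\star\beta$ is the partition of $X\cup X'$ in which distinct $u,v$ are in one block iff $u\sim v$ and the $\sim$-class of $u$ contains no singleton block of $\alpha$ or of $\beta$. Product $\circ$: $\alpha\circ\beta$ has as generalised lines exactly the sets $A\cup D'$ with $A\cup B'$ a generalised line of $\alpha$ and $B\cup D'$ a generalised line of $\beta$ (same $B$), all other elements being points. $\mathcal{PI}^{\ast}_X=(P_X,\star)$, $\overline{\mathcal{PI}^{\ast}}_X=(P_X,\circ)$; $\mathcal{R},\mathcal{L},\mathcal{D},\mathcal{J}$ are Green's relations. *)

theory Defs
  imports Main
begin

text \<open>An element alpha of P_X is represented by its set of generalised lines:
  a pair (A,B) stands for the block A \<union> B' (A in the top copy X, B in the bottom copy X').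
  All elements of X \<union> X' not covered by a line are points (singleton blocks).\<close>

type_synonym 'a bip = "('a set \<times> 'a set) set"

definition PX :: "'a set \<Rightarrow> 'a bip set" where
  "PX X = {\<alpha>. (\<forall>(A,B)\<in>\<alpha>. A \<noteq> {} \<and> B \<noteq> {} \<and> A \<subseteq> X \<and> B \<subseteq> X) \<and>
              (\<forall>(A,B)\<in>\<alpha>. \<forall>(C,D)\<in>\<alpha>. (A,B) \<noteq> (C,D) \<longrightarrow> A \<inter> C = {} \<and> B \<inter> D = {})}"

definition rank_of :: "'a bip \<Rightarrow> ('a set \<times> 'a set) rel" where
  "rank_of \<alpha> = card_of \<alpha>"

definition dom_of :: "'a bip \<Rightarrow> 'a set set" where
  "dom_of \<alpha> = {A. \<exists>B. (A,B) \<in> \<alpha>}"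

definition ran_of :: "'a bip \<Rightarrow> 'a set set" where
  "ran_of \<alpha> = {B. \<exists>A. (A,B) \<in> \<alpha>}"

text \<open>Three copies of X: top X (T), middle X'' (M), bottom X' (B).\<close>
datatype 'a lvl = T 'a | M 'a | Bt 'a

definition star_edges :: "'a bip \<Rightarrow> 'a bip \<Rightarrow> ('a lvl \<times> 'a lvl) set" where
  "star_edges \<alpha> \<beta> =
     {(u,v). \<exists>(A,B)\<in>\<alpha>. u \<in> T ` A \<union> M ` B \<and> v \<in> T ` A \<union> M ` B} \<union>
     {(u,v). \<exists>(B,D)\<in>\<beta>. u \<in> M ` B \<union> Bt ` D \<and> v \<in> M ` B \<union> Bt ` D}"

definition star_class :: "'a bip \<Rightarrow> 'a bip \<Rightarrow> 'a lvl \<Rightarrow> 'a lvl set" where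
  "star_class \<alpha> \<beta> u = {v. (u,v) \<in> (star_edges \<alpha> \<beta>)\<^sup>*}"

definition is_point :: "'a set \<Rightarrow> 'a bip \<Rightarrow> 'a bip \<Rightarrow> 'a lvl \<Rightarrow> bool" where
  "is_point X \<alpha> \<beta> w \<longleftrightarrow>
     (\<exists>x\<in>X. w = T x \<and> (\<forall>(A,B)\<in>\<alpha>. x \<notin> A)) \<or>
     (\<exists>x\<in>X. w = M x \<and> ((\<forall>(A,B)\<in>\<alpha>. x \<notin> B) \<or> (\<forall>(B,D)\<in>\<beta>. x \<notin> B))) \<or>
     (\<exists>x\<in>X. w = Bt x \<and> (\<forall>(B,D)\<in>\<beta>. x \<notin> D))"

text \<open>The product star: blocks of alpha*beta through u \<in> X \<union> X' are the traces on
  X \<union> X' of point-free classes; its generalised lines are those blocks meeting both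
  X and X' (all other blocks are singletons).\<close>
definition star :: "'a set \<Rightarrow> 'a bip \<Rightarrow> 'a bip \<Rightarrow> 'a bip" where
  "star X \<alpha> \<beta> =
     {({x\<in>X. T x \<in> C}, {x\<in>X. Bt x \<in> C}) | u C.
        u \<in> T ` X \<union> Bt ` X \<and> C = star_class \<alpha> \<beta> u \<and>
        (\<forall>w\<in>C. \<not> is_point X \<alpha> \<beta> w) \<and>
        {x\<in>X. T x \<in> C} \<noteq> {} \<and> {x\<in>X. Bt x \<in> C} \<noteq> {}}"

definition circ :: "'a bip \<Rightarrow> 'a bip \<Rightarrow> 'a bip" where
  "circ \<alpha> \<beta> = {(A,D). \<exists>B. (A,B) \<in> \<alpha> \<and> (B,D) \<in> \<beta>}"

text \<open>Green's relations of a semigroup (S, m), using S^1.\<close>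
definition greenR :: "'s set \<Rightarrow> ('s \<Rightarrow> 's \<Rightarrow> 's) \<Rightarrow> 's \<Rightarrow> 's \<Rightarrow> bool" where
  "greenR S m a b \<longleftrightarrow> insert a ((\<lambda>s. m a s) ` S) = insert b ((\<lambda>s. m b s) ` S)"

definition greenL :: "'s set \<Rightarrow> ('s \<Rightarrow> 's \<Rightarrow> 's) \<Rightarrow> 's \<Rightarrow> 's \<Rightarrow> bool" where
  "greenL S m a b \<longleftrightarrow> insert a ((\<lambda>s. m s a) ` S) = insert b ((\<lambda>s. m s b) ` S)"

definition ideal_gen :: "'s set \<Rightarrow> ('s \<Rightarrow> 's \<Rightarrow> 's) \<Rightarrow> 's \<Rightarrow> 's set" where
  "ideal_gen S m a = {a} \<union> (\<lambda>s. m a s) ` S \<union> (\<lambda>s. m s a) ` S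
                      \<union> {m (m s a) t | s t. s \<in> S \<and> t \<in> S}"

definition greenJ :: "'s set \<Rightarrow> ('s \<Rightarrow> 's \<Rightarrow> 's) \<Rightarrow> 's \<Rightarrow> 's \<Rightarrow> bool" where
  "greenJ S m a b \<longleftrightarrow> ideal_gen S m a = ideal_gen S m b"

definition greenD :: "'s set \<Rightarrow> ('s \<Rightarrow> 's \<Rightarrow> 's) \<Rightarrow> 's \<Rightarrow> 's \<Rightarrow> bool" where
  "greenD S m a b \<longleftrightarrow> (\<exists>c\<in>S. greenR S m a c \<and> greenL S m c b)"

text \<open>Two-sided ideal (the empty set is allowed; it is J_0).\<close>
definition is_ideal :: "'s set \<Rightarrow> ('s \<Rightarrow> 's \<Rightarrow> 's) \<Rightarrow> 's set \<Rightarrow> bool" where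
  "is_ideal S m I \<longleftrightarrow> I \<subseteq> S \<and> (\<forall>s\<in>S. \<forall>i\<in>I. m s i \<in> I \<and> m i s \<in> I)"

end

theory Submission
  imports Defs
begin

unbundle cardinal_syntax

lemma PX_D:
  assumes "\<alpha> \<in> PX X" "(A,B) \<in> \<alpha>"
  shows "A \<noteq> {}" "B \<noteq> {}" "A \<subseteq> X" "B \<subseteq> X"
  using assms unfolding PX_def by auto

lemma PX_disjA:
  assumes "\<alpha> \<in> PX X" "(A,B) \<in> \<alpha>" "(A',B') \<in> \<alpha>" "x \<in> A" "x \<in> A'"
  shows "A = A' \<and> B = B'"
proof (rule ccontr)
  assume "\<not> (A = A' \<and> B = B')"
  then have "(A,B) \<noteq> (A',B')" by simp
  then have "A \<inter> A' = {}" using assms(1-3) unfolding PX_def by fastforce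
  then show False using assms(4,5) by blast
qed
lemma PX_disjB:
  assumes "\<alpha> \<in> PX X" "(A,B) \<in> \<alpha>" "(A',B') \<in> \<alpha>" "x \<in> B" "x \<in> B'"
  shows "A = A' \<and> B = B'"
proof (rule ccontr)
  assume "\<not> (A = A' \<and> B = B')"
  then have "(A,B) \<noteq> (A',B')" by simp
  then have "B \<inter> B' = {}" using assms(1-3) unfolding PX_def by fastforce
  then show False using assms(4,5) by blast
qed

lemma PX_I:
  assumes "\<And>A B. (A,B) \<in> \<alpha> \<Longrightarrow> A \<noteq> {} \<and> B \<noteq> {} \<and> A \<subseteq> X \<and> B \<subseteq> X"
  and "\<And>A B C D x y. (A,B) \<in> \<alpha> \<Longrightarrow> (C,D) \<in> \<alpha> \<Longrightarrow> (x \<in> A \<and> x \<in> C) \<or> (y \<in> B \<and> y \<in> D) \<Longrightarrow> A = C \<and> B = D"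
  shows "\<alpha> \<in> PX X"
proof -
  have 1: "\<forall>p\<in>\<alpha>. fst p \<noteq> {} \<and> snd p \<noteq> {} \<and> fst p \<subseteq> X \<and> snd p \<subseteq> X"
    using assms(1) by (metis prod.collapse)
  have 2: "\<forall>p\<in>\<alpha>. \<forall>q\<in>\<alpha>. p \<noteq> q \<longrightarrow> fst p \<inter> fst q = {} \<and> snd p \<inter> snd q = {}"
  proof (intro ballI impI)
    fix p q assume h: "p \<in> \<alpha>" "q \<in> \<alpha>" "p \<noteq> q"
    obtain A B C D where pq: "p = (A,B)" "q = (C,D)" by (cases p, cases q) auto
    have "A \<inter> C = {}"
    proof (rule ccontr)
      assume "A \<inter> C \<noteq> {}" then obtain x where "x \<in> A" "x \<in> C" by blast
      then have "A = C \<and> B = D" using assms(2)[of A B C D x x] h pq by blast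
      then show False using h pq by simp
    qed
    moreover have "B \<inter> D = {}"
    proof (rule ccontr)
      assume "B \<inter> D \<noteq> {}" then obtain x where "x \<in> B" "x \<in> D" by blast
      then have "A = C \<and> B = D" using assms(2)[of A B C D x x] h pq by blast
      then show False using h pq by simp
    qed
    ultimately show "fst p \<inter> fst q = {} \<and> snd p \<inter> snd q = {}" using pq by simp
  qed
  show ?thesis unfolding PX_def using 1 2 by (simp add: split_def) (metis prod.expand)
qed

lemma circ_PX:
  assumes "\<alpha> \<in> PX X" "\<beta> \<in> PX X"
  shows "circ \<alpha> \<beta> \<in> PX X"
proof (rule PX_I)
  fix A D assume "(A,D) \<in> circ \<alpha> \<beta>"
  then obtain B where "(A,B) \<in> \<alpha>" "(B,D) \<in> \<beta>" unfolding circ_def by auto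
  then show "A \<noteq> {} \<and> D \<noteq> {} \<and> A \<subseteq> X \<and> D \<subseteq> X" using PX_D[OF assms(1)] PX_D[OF assms(2)] by simp
next
  fix A D C E x y assume h: "(A,D) \<in> circ \<alpha> \<beta>" "(C,E) \<in> circ \<alpha> \<beta>"
     "(x \<in> A \<and> x \<in> C) \<or> (y \<in> D \<and> y \<in> E)"
  obtain B where B: "(A,B) \<in> \<alpha>" "(B,D) \<in> \<beta>" using h(1) unfolding circ_def by auto
  obtain B' where B': "(C,B') \<in> \<alpha>" "(B',E) \<in> \<beta>" using h(2) unfolding circ_def by auto
  show "A = C \<and> D = E"
  proof (cases "x \<in> A \<and> x \<in> C")
    case True
    then have "A = C \<and> B = B'" using PX_disjA[OF assms(1) B(1) B'(1)] by blast
    moreover obtain z where "z \<in> B" using PX_D(2)[OF assms(1) B(1)] by blast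
    ultimately show ?thesis using PX_disjA[OF assms(2) B(2) B'(2), of z] by blast
  next
    case False
    then have "y \<in> D \<and> y \<in> E" using h(3) by blast
    then have "D = E \<and> B = B'" using PX_disjB[OF assms(2) B(2) B'(2)] by blast
    moreover obtain z where "z \<in> B" using PX_D(2)[OF assms(1) B(1)] by blast
    ultimately show ?thesis using PX_disjB[OF assms(1) B(1) B'(1), of z] by blast
  qed
qed

lemma circ_R:
  assumes a: "a \<in> PX X" and c: "c \<in> PX X" and sub: "dom_of c \<subseteq> dom_of a"
  shows "\<exists>s\<in>PX X. circ a s = c"
proof -
  define s where "s = {(B,D). \<exists>A. (A,B) \<in> a \<and> (A,D) \<in> c}"
  have "s \<in> PX X"
  proof (rule PX_I)
    fix B D assume "(B,D) \<in> s"
    then obtain A where "(A,B) \<in> a" "(A,D) \<in> c" unfolding s_def by auto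
    then show "B \<noteq> {} \<and> D \<noteq> {} \<and> B \<subseteq> X \<and> D \<subseteq> X" using PX_D[OF a] PX_D[OF c] by simp
  next
    fix B D B' D' x y assume h: "(B,D) \<in> s" "(B',D') \<in> s" "(x \<in> B \<and> x \<in> B') \<or> (y \<in> D \<and> y \<in> D')"
    obtain A where A: "(A,B) \<in> a" "(A,D) \<in> c" using h(1) unfolding s_def by auto
    obtain A' where A': "(A',B') \<in> a" "(A',D') \<in> c" using h(2) unfolding s_def by auto
    obtain z where z: "z \<in> A" using PX_D(1)[OF a A(1)] by blast
    show "B = B' \<and> D = D'"
    proof (cases "x \<in> B \<and> x \<in> B'")
      case True
      then have "A = A'" using PX_disjB[OF a A(1) A'(1)] by blast
      then show ?thesis using z PX_disjA[OF a A(1) A'(1)] PX_disjA[OF c A(2) A'(2)] by blast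
    next
      case False
      then have "A = A'" using h(3) PX_disjB[OF c A(2) A'(2)] by blast
      then show ?thesis using z PX_disjA[OF a A(1) A'(1)] PX_disjA[OF c A(2) A'(2)] by blast
    qed
  qed
  moreover have "circ a s = c"
  proof (intro set_eqI iffI)
    fix p assume "p \<in> circ a s"
    then obtain A D B A' where "p = (A,D)" "(A,B) \<in> a" "(A',B) \<in> a" "(A',D) \<in> c"
      unfolding circ_def s_def by auto
    moreover obtain z where "z \<in> B" using PX_D(2)[OF a \<open>(A,B) \<in> a\<close>] by blast
    ultimately show "p \<in> c" using PX_disjB[OF a, of A B A' B z] by blast
  next
    fix p assume "p \<in> c"
    then obtain A D where p: "p = (A,D)" "(A,D) \<in> c" by (cases p) auto
    then have "A \<in> dom_of a" using sub unfolding dom_of_def by blast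
    then obtain B where "(A,B) \<in> a" unfolding dom_of_def by blast
    then show "p \<in> circ a s" using p unfolding circ_def s_def by blast
  qed
  ultimately show ?thesis by blast
qed

lemma circ_L:
  assumes a: "a \<in> PX X" and c: "c \<in> PX X" and sub: "ran_of c \<subseteq> ran_of a"
  shows "\<exists>s\<in>PX X. circ s a = c"
proof -
  define s where "s = {(A,B). \<exists>D. (B,D) \<in> a \<and> (A,D) \<in> c}"
  have "s \<in> PX X"
  proof (rule PX_I)
    fix B D assume "(B,D) \<in> s"
    then obtain A where "(D,A) \<in> a" "(B,A) \<in> c" unfolding s_def by auto
    then show "B \<noteq> {} \<and> D \<noteq> {} \<and> B \<subseteq> X \<and> D \<subseteq> X" using PX_D[OF a] PX_D[OF c] by simp
  next
    fix B D B' D' x y assume h: "(B,D) \<in> s" "(B',D') \<in> s" "(x \<in> B \<and> x \<in> B') \<or> (y \<in> D \<and> y \<in> D')"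
    obtain A where A: "(D,A) \<in> a" "(B,A) \<in> c" using h(1) unfolding s_def by auto
    obtain A' where A': "(D',A') \<in> a" "(B',A') \<in> c" using h(2) unfolding s_def by auto
    obtain z where z: "z \<in> A" using PX_D(2)[OF a A(1)] by blast
    show "B = B' \<and> D = D'"
    proof (cases "x \<in> B \<and> x \<in> B'")
      case True
      then have "A = A'" using PX_disjA[OF c A(2) A'(2)] by blast
      then show ?thesis using z PX_disjB[OF a A(1) A'(1)] PX_disjB[OF c A(2) A'(2)] by blast
    next
      case False
      then have "A = A'" using h(3) PX_disjA[OF a A(1) A'(1)] by blast
      then show ?thesis using z PX_disjB[OF a A(1) A'(1)] PX_disjB[OF c A(2) A'(2)] by blast
    qed
  qed
  moreover have "circ s a = c"
  proof (intro set_eqI iffI)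
    fix p assume "p \<in> circ s a"
    then obtain A D B D' where "p = (A,D)" "(B,D) \<in> a" "(B,D') \<in> a" "(A,D') \<in> c"
      unfolding circ_def s_def by auto
    moreover obtain z where "z \<in> B" using PX_D(1)[OF a \<open>(B,D) \<in> a\<close>] by blast
    ultimately show "p \<in> c" using PX_disjA[OF a, of B D B D' z] by blast
  next
    fix p assume "p \<in> c"
    then obtain A D where p: "p = (A,D)" "(A,D) \<in> c" by (cases p) auto
    then have "D \<in> ran_of a" using sub unfolding ran_of_def by blast
    then obtain B where "(B,D) \<in> a" unfolding ran_of_def by blast
    then show "p \<in> circ s a" using p unfolding circ_def s_def by blast
  qed
  ultimately show ?thesis by blast
qed




definition good :: "'a set \<Rightarrow> ('a bip \<Rightarrow> 'a bip \<Rightarrow> 'a bip) \<Rightarrow> bool" where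
 "good X m \<longleftrightarrow>
  (\<forall>\<alpha>\<in>PX X. \<forall>\<beta>\<in>PX X. m \<alpha> \<beta> \<in> PX X) \<and>
  (\<forall>\<alpha>\<in>PX X. \<forall>\<beta>\<in>PX X. \<forall>P Q x. (P,Q) \<in> m \<alpha> \<beta> \<longrightarrow> x \<in> P \<longrightarrow> (\<exists>A B. (A,B)\<in>\<alpha> \<and> x\<in>A \<and> A \<subseteq> P)) \<and>
  (\<forall>\<alpha>\<in>PX X. \<forall>\<beta>\<in>PX X. \<forall>P Q z. (P,Q) \<in> m \<alpha> \<beta> \<longrightarrow> z \<in> Q \<longrightarrow> (\<exists>B D. (B,D)\<in>\<beta> \<and> z\<in>D \<and> D \<subseteq> Q)) \<and>
  (\<forall>a\<in>PX X. \<forall>b\<in>PX X. \<forall>t\<in>PX X. dom_of a = dom_of b \<longrightarrow> (\<exists>s\<in>PX X. m a s = m b t)) \<and>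
  (\<forall>a\<in>PX X. \<forall>b\<in>PX X. \<forall>t\<in>PX X. ran_of a = ran_of b \<longrightarrow> (\<exists>s\<in>PX X. m s a = m t b)) \<and>
  (\<forall>a\<in>PX X. \<forall>c\<in>PX X. dom_of c \<subseteq> dom_of a \<longrightarrow> (\<exists>s\<in>PX X. m a s = c)) \<and>
  (\<forall>a\<in>PX X. \<forall>c\<in>PX X. ran_of c \<subseteq> ran_of a \<longrightarrow> (\<exists>s\<in>PX X. m s a = c))"

lemma cover_le_fst:
  fixes \<gamma> \<alpha> :: "'a bip"
  assumes g: "\<gamma> \<in> PX X" and a: "\<alpha> \<in> PX X"
  and cov: "\<And>L. L \<in> \<gamma> \<Longrightarrow> \<exists>p\<in>\<alpha>. fst p \<subseteq> fst L"
  shows "|\<gamma>| \<le>o |\<alpha>|"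
proof -
  define f where "f = (\<lambda>L::'a set \<times> 'a set. SOME p. p \<in> \<alpha> \<and> fst p \<subseteq> fst L)"
  have f: "f L \<in> \<alpha> \<and> fst (f L) \<subseteq> fst L" if "L \<in> \<gamma>" for L
    unfolding f_def using someI_ex[OF cov[OF that, unfolded Bex_def]] by blast
  have "inj_on f \<gamma>"
  proof (rule inj_onI)
    fix L1 L2 assume h: "L1 \<in> \<gamma>" "L2 \<in> \<gamma>" "f L1 = f L2"
    obtain x where x: "x \<in> fst (f L1)"
      using PX_D(1)[OF a, of "fst (f L1)" "snd (f L1)"] f[OF h(1)] by auto
    have "x \<in> fst L1" "x \<in> fst L2" using x f[OF h(1)] f[OF h(2)] h(3) by auto
    then show "L1 = L2" using PX_disjA[OF g, of "fst L1" "snd L1" "fst L2" "snd L2" x] h by (simp add: prod_eq_iff)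
  qed
  moreover have "f ` \<gamma> \<subseteq> \<alpha>" using f by auto
  ultimately show ?thesis using card_of_ordLeq by blast
qed

lemma cover_le_snd:
  fixes \<gamma> \<alpha> :: "'a bip"
  assumes g: "\<gamma> \<in> PX X" and a: "\<alpha> \<in> PX X"
  and cov: "\<And>L. L \<in> \<gamma> \<Longrightarrow> \<exists>p\<in>\<alpha>. snd p \<subseteq> snd L"
  shows "|\<gamma>| \<le>o |\<alpha>|"
proof -
  define f where "f = (\<lambda>L::'a set \<times> 'a set. SOME p. p \<in> \<alpha> \<and> snd p \<subseteq> snd L)"
  have f: "f L \<in> \<alpha> \<and> snd (f L) \<subseteq> snd L" if "L \<in> \<gamma>" for L
    unfolding f_def using someI_ex[OF cov[OF that, unfolded Bex_def]] by blast
  have "inj_on f \<gamma>"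
  proof (rule inj_onI)
    fix L1 L2 assume h: "L1 \<in> \<gamma>" "L2 \<in> \<gamma>" "f L1 = f L2"
    obtain x where x: "x \<in> snd (f L1)"
      using PX_D(2)[OF a, of "fst (f L1)" "snd (f L1)"] f[OF h(1)] by auto
    have "x \<in> snd L1" "x \<in> snd L2" using x f[OF h(1)] f[OF h(2)] h(3) by auto
    then show "L1 = L2" using PX_disjB[OF g, of "fst L1" "snd L1" "fst L2" "snd L2" x] h by (simp add: prod_eq_iff)
  qed
  moreover have "f ` \<gamma> \<subseteq> \<alpha>" using f by auto
  ultimately show ?thesis using card_of_ordLeq by blast
qed

lemma goodD:
  assumes "good X m"
  shows "\<And>\<alpha> \<beta>. \<alpha>\<in>PX X \<Longrightarrow> \<beta>\<in>PX X \<Longrightarrow> m \<alpha> \<beta> \<in> PX X"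
  and "\<And>\<alpha> \<beta> P Q x. \<alpha>\<in>PX X \<Longrightarrow> \<beta>\<in>PX X \<Longrightarrow> (P,Q) \<in> m \<alpha> \<beta> \<Longrightarrow> x \<in> P \<Longrightarrow> (\<exists>A B. (A,B)\<in>\<alpha> \<and> x\<in>A \<and> A \<subseteq> P)"
  and "\<And>\<alpha> \<beta> P Q z. \<alpha>\<in>PX X \<Longrightarrow> \<beta>\<in>PX X \<Longrightarrow> (P,Q) \<in> m \<alpha> \<beta> \<Longrightarrow> z \<in> Q \<Longrightarrow> (\<exists>B D. (B,D)\<in>\<beta> \<and> z\<in>D \<and> D \<subseteq> Q)"
  and "\<And>a b t. a\<in>PX X \<Longrightarrow> b\<in>PX X \<Longrightarrow> t\<in>PX X \<Longrightarrow> dom_of a = dom_of b \<Longrightarrow> (\<exists>s\<in>PX X. m a s = m b t)"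
  and "\<And>a b t. a\<in>PX X \<Longrightarrow> b\<in>PX X \<Longrightarrow> t\<in>PX X \<Longrightarrow> ran_of a = ran_of b \<Longrightarrow> (\<exists>s\<in>PX X. m s a = m t b)"
  and "\<And>a c. a\<in>PX X \<Longrightarrow> c\<in>PX X \<Longrightarrow> dom_of c \<subseteq> dom_of a \<Longrightarrow> (\<exists>s\<in>PX X. m a s = c)"
  and "\<And>a c. a\<in>PX X \<Longrightarrow> c\<in>PX X \<Longrightarrow> ran_of c \<subseteq> ran_of a \<Longrightarrow> (\<exists>s\<in>PX X. m s a = c)"
  using assms unfolding good_def by meson+

lemma good_le1:
  assumes m: "good X m" and a: "\<alpha> \<in> PX X" and b: "\<beta> \<in> PX X"
  shows "|m \<alpha> \<beta>| \<le>o |\<alpha>|"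
proof (rule cover_le_fst[OF goodD(1)[OF m a b] a])
  fix L assume L: "L \<in> m \<alpha> \<beta>"
  obtain P Q where PQ: "L = (P,Q)" by (cases L)
  obtain x where "x \<in> P" using PX_D(1)[OF goodD(1)[OF m a b]] L PQ by blast
  then obtain A B where "(A,B)\<in>\<alpha>" "A \<subseteq> P" using goodD(2)[OF m a b] L PQ by blast
  then show "\<exists>p\<in>\<alpha>. fst p \<subseteq> fst L" using PQ by force
qed

lemma good_le2:
  assumes m: "good X m" and a: "\<alpha> \<in> PX X" and b: "\<beta> \<in> PX X"
  shows "|m \<alpha> \<beta>| \<le>o |\<beta>|"
proof (rule cover_le_snd[OF goodD(1)[OF m a b] b])
  fix L assume L: "L \<in> m \<alpha> \<beta>"
  obtain P Q where PQ: "L = (P,Q)" by (cases L)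
  obtain x where "x \<in> Q" using PX_D(2)[OF goodD(1)[OF m a b]] L PQ by blast
  then obtain B D where "(B,D)\<in>\<beta>" "D \<subseteq> Q" using goodD(3)[OF m a b] L PQ by blast
  then show "\<exists>p\<in>\<beta>. snd p \<subseteq> snd L" using PQ by force
qed

definition covd :: "'a bip \<Rightarrow> 'a bip \<Rightarrow> bool" where
  "covd c a \<longleftrightarrow> (\<forall>P\<in>dom_of c. \<forall>x\<in>P. \<exists>A\<in>dom_of a. x \<in> A \<and> A \<subseteq> P)"
definition covr :: "'a bip \<Rightarrow> 'a bip \<Rightarrow> bool" where
  "covr c a \<longleftrightarrow> (\<forall>P\<in>ran_of c. \<forall>x\<in>P. \<exists>A\<in>ran_of a. x \<in> A \<and> A \<subseteq> P)"

lemma covd_refl: "covd a a" unfolding covd_def by blast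
lemma covr_refl: "covr a a" unfolding covr_def by blast

lemma covd_mult:
  assumes m: "good X m" and a: "a \<in> PX X" and s: "s \<in> PX X"
  shows "covd (m a s) a"
  unfolding covd_def
proof (intro ballI)
  fix P x assume "P \<in> dom_of (m a s)" "x \<in> P"
  then obtain Q where "(P,Q) \<in> m a s" unfolding dom_of_def by blast
  then obtain A B where "(A,B)\<in>a" "x\<in>A" "A \<subseteq> P" using goodD(2)[OF m a s] \<open>x \<in> P\<close> by blast
  then show "\<exists>A\<in>dom_of a. x \<in> A \<and> A \<subseteq> P" unfolding dom_of_def by blast
qed

lemma covr_mult:
  assumes m: "good X m" and a: "a \<in> PX X" and s: "s \<in> PX X"
  shows "covr (m s a) a"
  unfolding covr_def
proof (intro ballI)
  fix P x assume "P \<in> ran_of (m s a)" "x \<in> P"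
  then obtain Q where "(Q,P) \<in> m s a" unfolding ran_of_def by blast
  then obtain A B where "(B,A)\<in>a" "x\<in>A" "A \<subseteq> P" using goodD(3)[OF m s a] \<open>x \<in> P\<close> by blast
  then show "\<exists>A\<in>ran_of a. x \<in> A \<and> A \<subseteq> P" unfolding ran_of_def by blast
qed

lemma covd_sub:
  assumes a: "a \<in> PX X" and c: "c \<in> PX X" and h1: "covd c a" and h2: "covd a c"
  shows "dom_of c \<subseteq> dom_of a"
proof
  fix P assume P: "P \<in> dom_of c"
  then obtain Q where PQ: "(P,Q) \<in> c" unfolding dom_of_def by blast
  obtain x where x: "x \<in> P" using PX_D(1)[OF c PQ] by blast
  obtain A where A: "A \<in> dom_of a" "x \<in> A" "A \<subseteq> P" using h1 P x unfolding covd_def by blast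
  obtain P' where P': "P' \<in> dom_of c" "x \<in> P'" "P' \<subseteq> A" using h2 A unfolding covd_def by blast
  obtain Q' where PQ': "(P',Q') \<in> c" using P' unfolding dom_of_def by blast
  have "P = P'" using PX_disjA[OF c PQ PQ' x] P' by blast
  then have "P = A" using A P' by blast
  then show "P \<in> dom_of a" using A by simp
qed

lemma covr_sub:
  assumes a: "a \<in> PX X" and c: "c \<in> PX X" and h1: "covr c a" and h2: "covr a c"
  shows "ran_of c \<subseteq> ran_of a"
proof
  fix P assume P: "P \<in> ran_of c"
  then obtain Q where PQ: "(Q,P) \<in> c" unfolding ran_of_def by blast
  obtain x where x: "x \<in> P" using PX_D(2)[OF c PQ] by blast
  obtain A where A: "A \<in> ran_of a" "x \<in> A" "A \<subseteq> P" using h1 P x unfolding covr_def by blast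
  obtain P' where P': "P' \<in> ran_of c" "x \<in> P'" "P' \<subseteq> A" using h2 A unfolding covr_def by blast
  obtain Q' where PQ': "(Q',P') \<in> c" using P' unfolding ran_of_def by blast
  have "P = P'" using PX_disjB[OF c PQ PQ' x] P' by blast
  then have "P = A" using A P' by blast
  then show "P \<in> ran_of a" using A by simp
qed

lemma R_iff:
  assumes m: "good X m" and a: "a \<in> PX X" and b: "b \<in> PX X"
  shows "greenR (PX X) m a b \<longleftrightarrow> dom_of a = dom_of b"
proof
  assume "greenR (PX X) m a b"
  then have e: "insert a (m a ` PX X) = insert b (m b ` PX X)" unfolding greenR_def .
  have "b \<in> insert a (m a ` PX X)" using e by blast
  then have 1: "covd b a" using covd_refl covd_mult[OF m a] by blast
  have "a \<in> insert b (m b ` PX X)" using e by blast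
  then have 2: "covd a b" using covd_refl covd_mult[OF m b] by blast
  show "dom_of a = dom_of b" using covd_sub[OF a b 1 2] covd_sub[OF b a 2 1] by blast
next
  assume d: "dom_of a = dom_of b"
  have sub: "insert a (m a ` PX X) \<subseteq> insert b (m b ` PX X)"
    if a: "a \<in> PX X" and b: "b \<in> PX X" and d: "dom_of a = dom_of b" for a b
  proof -
    obtain s where "s \<in> PX X" "m b s = a" using goodD(6)[OF m b a] d by auto
    moreover have "m a t \<in> m b ` PX X" if "t \<in> PX X" for t
      using goodD(4)[OF m b a that] d by force
    ultimately show ?thesis by blast
  qed
  show "greenR (PX X) m a b" unfolding greenR_def using sub[OF a b d] sub[OF b a d[symmetric]] by blast
qed

lemma L_iff:
  assumes m: "good X m" and a: "a \<in> PX X" and b: "b \<in> PX X"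
  shows "greenL (PX X) m a b \<longleftrightarrow> ran_of a = ran_of b"
proof
  assume "greenL (PX X) m a b"
  then have e: "insert a ((\<lambda>s. m s a) ` PX X) = insert b ((\<lambda>s. m s b) ` PX X)" unfolding greenL_def .
  have "b \<in> insert a ((\<lambda>s. m s a) ` PX X)" using e by blast
  then have 1: "covr b a" using covr_refl covr_mult[OF m a] by blast
  have "a \<in> insert b ((\<lambda>s. m s b) ` PX X)" using e by blast
  then have 2: "covr a b" using covr_refl covr_mult[OF m b] by blast
  show "ran_of a = ran_of b" using covr_sub[OF a b 1 2] covr_sub[OF b a 2 1] by blast
next
  assume d: "ran_of a = ran_of b"
  have sub: "insert a ((\<lambda>s. m s a) ` PX X) \<subseteq> insert b ((\<lambda>s. m s b) ` PX X)"
    if a: "a \<in> PX X" and b: "b \<in> PX X" and d: "ran_of a = ran_of b" for a b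
  proof -
    obtain s where "s \<in> PX X" "m s b = a" using goodD(7)[OF m b a] d by auto
    moreover have "m t a \<in> (\<lambda>s. m s b) ` PX X" if "t \<in> PX X" for t
      using goodD(5)[OF m b a that] d by force
    ultimately show ?thesis by blast
  qed
  show "greenL (PX X) m a b" unfolding greenL_def using sub[OF a b d] sub[OF b a d[symmetric]] by blast
qed




lemma PX_Dp:
  assumes "\<alpha> \<in> PX X" "p \<in> \<alpha>"
  shows "fst p \<noteq> {}" "snd p \<noteq> {}" "fst p \<subseteq> X" "snd p \<subseteq> X"
  using PX_D[OF assms(1), of "fst p" "snd p"] assms(2) by simp_all

lemma PX_eqA:
  assumes "\<alpha> \<in> PX X" "p \<in> \<alpha>" "q \<in> \<alpha>" "x \<in> fst p" "x \<in> fst q"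
  shows "p = q"
proof -
  have "(fst p, snd p) \<in> \<alpha>" "(fst q, snd q) \<in> \<alpha>" using assms by simp_all
  then have "fst p = fst q \<and> snd p = snd q" using PX_disjA[OF assms(1)] assms(4,5) by metis
  then show ?thesis by (simp add: prod_eq_iff)
qed

lemma PX_eqB:
  assumes "\<alpha> \<in> PX X" "p \<in> \<alpha>" "q \<in> \<alpha>" "x \<in> snd p" "x \<in> snd q"
  shows "p = q"
proof -
  have "(fst p, snd p) \<in> \<alpha>" "(fst q, snd q) \<in> \<alpha>" using assms by simp_all
  then have "fst p = fst q \<and> snd p = snd q" using PX_disjB[OF assms(1)] assms(4,5) by metis
  then show ?thesis by (simp add: prod_eq_iff)
qed

lemma mix_ran_sub:
  fixes a b :: "'a bip"
  assumes "g ` a \<subseteq> b"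
  shows "ran_of ((\<lambda>p. (fst p, snd (g p))) ` a) \<subseteq> ran_of b"
proof
  fix D assume "D \<in> ran_of ((\<lambda>p. (fst p, snd (g p))) ` a)"
  then obtain A where "(A,D) \<in> (\<lambda>p. (fst p, snd (g p))) ` a" unfolding ran_of_def by blast
  then obtain p where p: "p \<in> a" "D = snd (g p)" by auto
  then have "(fst (g p), D) \<in> b" using assms by auto
  then show "D \<in> ran_of b" unfolding ran_of_def by blast
qed

lemma mix:
  fixes a b :: "'a bip"
  assumes a: "a \<in> PX X" and b: "b \<in> PX X" and g: "inj_on g a" "g ` a \<subseteq> b"
  defines "c \<equiv> (\<lambda>p. (fst p, snd (g p))) ` a"
  shows "c \<in> PX X" "dom_of c = dom_of a" "g ` a = b \<Longrightarrow> ran_of c = ran_of b"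
proof -
  show "c \<in> PX X"
  proof (rule PX_I)
    fix A D assume "(A,D) \<in> c"
    then obtain p where p: "p \<in> a" "A = fst p" "D = snd (g p)" unfolding c_def by auto
    have "g p \<in> b" using p g by auto
    then show "A \<noteq> {} \<and> D \<noteq> {} \<and> A \<subseteq> X \<and> D \<subseteq> X"
      using PX_D[OF a, of "fst p" "snd p"] PX_D[OF b, of "fst (g p)" "snd (g p)"] p by simp
  next
    fix A D C E x y assume h: "(A,D) \<in> c" "(C,E) \<in> c" "(x \<in> A \<and> x \<in> C) \<or> (y \<in> D \<and> y \<in> E)"
    obtain p where p: "p \<in> a" "A = fst p" "D = snd (g p)" using h(1) unfolding c_def by auto
    obtain q where q: "q \<in> a" "C = fst q" "E = snd (g q)" using h(2) unfolding c_def by auto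
    have "p = q"
    proof (cases "x \<in> A \<and> x \<in> C")
      case True
      then show ?thesis using PX_disjA[OF a, of "fst p" "snd p" "fst q" "snd q" x] p q by (simp add: prod_eq_iff)
    next
      case False
      then have "y \<in> D \<and> y \<in> E" using h(3) by blast
      then have "g p = g q" using PX_disjB[OF b, of "fst (g p)" "snd (g p)" "fst (g q)" "snd (g q)" y] p q g
        by (auto simp add: prod_eq_iff)
      then show ?thesis using g(1) p q inj_onD by metis
    qed
    then show "A = C \<and> D = E" using p q by simp
  qed
  show "dom_of c = dom_of a" unfolding c_def dom_of_def by force
  show "ran_of c = ran_of b" if "g ` a = b"
  proof
    show "ran_of c \<subseteq> ran_of b" unfolding c_def using mix_ran_sub[OF g(2)] .
    show "ran_of b \<subseteq> ran_of c"
    proof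
      fix D assume "D \<in> ran_of b"
      then obtain B where "(B,D) \<in> b" unfolding ran_of_def by blast
      then have "(B,D) \<in> g ` a" using that by simp
      then obtain p where "p \<in> a" "g p = (B,D)" by (metis imageE)
      then show "D \<in> ran_of c" unfolding c_def ran_of_def by force
    qed
  qed
qed

lemma card_dom:
  fixes \<alpha> :: "'a bip"
  assumes a: "\<alpha> \<in> PX X" shows "|\<alpha>| =o |dom_of \<alpha>|"
proof -
  have "inj_on fst \<alpha>"
  proof (rule inj_onI)
    fix p q assume h: "p \<in> \<alpha>" "q \<in> \<alpha>" "fst p = fst q"
    obtain x where "x \<in> fst p" using PX_Dp(1)[OF a h(1)] by auto
    then show "p = q" using PX_eqA[OF a h(1,2), of x] h by simp
  qed
  moreover have "fst ` \<alpha> = dom_of \<alpha>" unfolding dom_of_def by force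
  ultimately have "bij_betw fst \<alpha> (dom_of \<alpha>)" unfolding bij_betw_def by blast
  then show ?thesis using card_of_ordIso by blast
qed

lemma card_ran:
  fixes \<alpha> :: "'a bip"
  assumes a: "\<alpha> \<in> PX X" shows "|\<alpha>| =o |ran_of \<alpha>|"
proof -
  have "inj_on snd \<alpha>"
  proof (rule inj_onI)
    fix p q assume h: "p \<in> \<alpha>" "q \<in> \<alpha>" "snd p = snd q"
    obtain x where "x \<in> snd p" using PX_Dp(2)[OF a h(1)] by auto
    then show "p = q" using PX_eqB[OF a h(1,2), of x] h by simp
  qed
  moreover have "snd ` \<alpha> = ran_of \<alpha>" unfolding ran_of_def by force
  ultimately have "bij_betw snd \<alpha> (ran_of \<alpha>)" unfolding bij_betw_def by blast
  then show ?thesis using card_of_ordIso by blast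
qed

lemma rank_le_X:
  fixes \<alpha> :: "'a bip"
  assumes a: "\<alpha> \<in> PX X" shows "|\<alpha>| \<le>o |X|"
proof -
  define f where "f = (\<lambda>p::'a set \<times> 'a set. SOME x. x \<in> fst p)"
  have f: "f p \<in> fst p" if "p \<in> \<alpha>" for p
  proof -
    have "fst p \<noteq> {}" using PX_D(1)[OF a, of "fst p" "snd p"] that by simp
    then show ?thesis unfolding f_def by (simp add: some_in_eq)
  qed
  have "inj_on f \<alpha>"
  proof (rule inj_onI)
    fix p q assume h: "p \<in> \<alpha>" "q \<in> \<alpha>" "f p = f q"
    then show "p = q" using f[OF h(1)] f[OF h(2)] PX_eqA[OF a h(1,2), of "f p"] by simp
  qed
  moreover have "f ` \<alpha> \<subseteq> X"
  proof
    fix x assume "x \<in> f ` \<alpha>"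
    then obtain p where p: "p \<in> \<alpha>" "x = f p" by blast
    then show "x \<in> X" using f[OF p(1)] PX_Dp(3)[OF a p(1)] by blast
  qed
  ultimately show ?thesis using card_of_ordLeq by blast
qed

lemma A8:
  fixes a c :: "'a bip"
  assumes m: "good X m" and a: "a \<in> PX X" and c: "c \<in> PX X" and le: "|c| \<le>o |a|"
  shows "\<exists>s\<in>PX X. \<exists>t\<in>PX X. m (m s a) t = c"
proof -
  have "\<exists>g. inj_on g c \<and> g ` c \<subseteq> a" using le by (simp only: card_of_ordLeq)
  then obtain g where g: "inj_on g c" "g ` c \<subseteq> a" by blast
  define c' where "c' = (\<lambda>p. (fst p, snd (g p))) ` c"
  have c': "c' \<in> PX X" "dom_of c' = dom_of c" "ran_of c' \<subseteq> ran_of a"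
    unfolding c'_def by (rule mix(1)[OF c a g], rule mix(2)[OF c a g], rule mix_ran_sub[OF g(2)])
  obtain s where s: "s \<in> PX X" "m s a = c'" using goodD(7)[OF m a c'(1) c'(3)] by blast
  obtain t where t: "t \<in> PX X" "m c' t = c" using goodD(6)[OF m c'(1) c] c'(2) by blast
  show ?thesis using s t by blast
qed

lemma ideal_gen_eq:
  fixes a :: "'a bip"
  assumes m: "good X m" and a: "a \<in> PX X"
  shows "ideal_gen (PX X) m a = {c\<in>PX X. |c| \<le>o |a|}"
proof
  show "ideal_gen (PX X) m a \<subseteq> {c\<in>PX X. |c| \<le>o |a|}"
  proof
    fix c assume "c \<in> ideal_gen (PX X) m a"
    then consider "c = a" | s where "s \<in> PX X" "c = m a s" | s where "s \<in> PX X" "c = m s a"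
      | s t where "s \<in> PX X" "t \<in> PX X" "c = m (m s a) t"
      unfolding ideal_gen_def by blast
    then show "c \<in> {c\<in>PX X. |c| \<le>o |a|}"
    proof cases
      case 1 then show ?thesis using a ordLeq_refl[OF card_of_Card_order] by simp
    next
      case 2 then show ?thesis using good_le1[OF m a] goodD(1)[OF m a] by simp
    next
      case 3 then show ?thesis using good_le2[OF m _ a] goodD(1)[OF m _ a] by simp
    next
      case 4
      have sa: "m s a \<in> PX X" using goodD(1)[OF m 4(1) a] .
      have "|c| \<le>o |m s a|" using good_le1[OF m sa 4(2)] 4(3) by simp
      moreover have "|m s a| \<le>o |a|" using good_le2[OF m 4(1) a] .
      ultimately show ?thesis using 4 goodD(1)[OF m sa] ordLeq_transitive by auto
    qed
  qed
next
  show "{c\<in>PX X. |c| \<le>o |a|} \<subseteq> ideal_gen (PX X) m a"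
  proof
    fix c assume "c \<in> {c\<in>PX X. |c| \<le>o |a|}"
    then obtain s t where "s \<in> PX X" "t \<in> PX X" "m (m s a) t = c" using A8[OF m a] by blast
    then show "c \<in> ideal_gen (PX X) m a" unfolding ideal_gen_def by blast
  qed
qed

lemma J_iff:
  fixes a b :: "'a bip"
  assumes m: "good X m" and a: "a \<in> PX X" and b: "b \<in> PX X"
  shows "greenJ (PX X) m a b \<longleftrightarrow> |a| =o |b|"
proof
  assume "greenJ (PX X) m a b"
  then have e: "{c\<in>PX X. |c| \<le>o |a|} = {c\<in>PX X. |c| \<le>o |b|}"
    unfolding greenJ_def using ideal_gen_eq[OF m a] ideal_gen_eq[OF m b] by simp
  have "|a| \<le>o |b|" using e a ordLeq_refl[OF card_of_Card_order, of a] by blast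
  moreover have "|b| \<le>o |a|" using e b ordLeq_refl[OF card_of_Card_order, of b] by blast
  ultimately show "|a| =o |b|" using ordIso_iff_ordLeq by blast
next
  assume i: "|a| =o |b|"
  have "{c\<in>PX X. |c| \<le>o |a|} = {c\<in>PX X. |c| \<le>o |b|}"
    using i ordLeq_ordIso_trans ordIso_symmetric[OF i] by blast
  then show "greenJ (PX X) m a b"
    unfolding greenJ_def using ideal_gen_eq[OF m a] ideal_gen_eq[OF m b] by simp
qed

lemma D_iff:
  fixes a b :: "'a bip"
  assumes m: "good X m" and a: "a \<in> PX X" and b: "b \<in> PX X"
  shows "greenD (PX X) m a b \<longleftrightarrow> |a| =o |b|"
proof
  assume "greenD (PX X) m a b"
  then obtain c where c: "c \<in> PX X" "greenR (PX X) m a c" "greenL (PX X) m c b"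
    unfolding greenD_def by blast
  have d: "dom_of a = dom_of c" using R_iff[OF m a c(1)] c by simp
  have r: "ran_of c = ran_of b" using L_iff[OF m c(1) b] c by simp
  have "|a| =o |dom_of c|" using card_dom[OF a] d by simp
  also have "|dom_of c| =o |c|" using ordIso_symmetric[OF card_dom[OF c(1)]] .
  also have "|c| =o |ran_of b|" using card_ran[OF c(1)] r by simp
  also have "|ran_of b| =o |b|" using ordIso_symmetric[OF card_ran[OF b]] .
  finally show "|a| =o |b|" .
next
  assume "|a| =o |b|"
  then obtain g where g: "bij_betw g a b" using card_of_ordIso by blast
  then have g': "inj_on g a" "g ` a \<subseteq> b" "g ` a = b" unfolding bij_betw_def by auto
  define c where "c = (\<lambda>p. (fst p, snd (g p))) ` a"
  have c: "c \<in> PX X" "dom_of c = dom_of a" "ran_of c = ran_of b"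
    unfolding c_def by (rule mix(1)[OF a b g'(1,2)], rule mix(2)[OF a b g'(1,2)], rule mix(3)[OF a b g'(1,2) g'(3)])
  have "greenR (PX X) m a c" using R_iff[OF m a c(1)] c by simp
  moreover have "greenL (PX X) m c b" using L_iff[OF m c(1) b] c by simp
  ultimately show "greenD (PX X) m a b" unfolding greenD_def using c(1) by blast
qed

lemma ideal_form:
  fixes I :: "'a bip set"
  assumes m: "good X m" and I: "is_ideal (PX X) m I"
  shows "\<exists>\<xi> :: 'a set rel. Card_order \<xi> \<and> (\<xi>, cardSuc (card_of X)) \<in> ordLeq \<and>
               I = {\<alpha>\<in>PX X. (rank_of \<alpha>, \<xi>) \<in> ordLess}"
proof -
  have IS: "I \<subseteq> PX X" using I unfolding is_ideal_def by blast
  have down: "\<beta> \<in> I" if hh: "\<alpha> \<in> I" "\<beta> \<in> PX X" "|\<beta>| \<le>o |\<alpha>|" for \<alpha> \<beta>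
  proof -
    have aS: "\<alpha> \<in> PX X" using hh IS by blast
    obtain s t where st: "s \<in> PX X" "t \<in> PX X" "m (m s \<alpha>) t = \<beta>" using A8[OF m aS hh(2,3)] by blast
    have "m s \<alpha> \<in> I" using I st hh(1) unfolding is_ideal_def by blast
    then have "m (m s \<alpha>) t \<in> I" using I st unfolding is_ideal_def by blast
    then show ?thesis using st by simp
  qed
  have CX: "Card_order |X|" by (rule card_of_Card_order)
  show ?thesis
  proof (cases "I = PX X")
    case True
    have "I = {\<alpha>\<in>PX X. (rank_of \<alpha>, cardSuc (card_of X)) \<in> ordLess}"
    proof -
      have "|\<alpha>| <o cardSuc (card_of X)" if "\<alpha> \<in> PX X" for \<alpha> :: "'a bip"
        using rank_le_X[OF that] cardSuc_greater[OF CX] ordLeq_ordLess_trans by blast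
      then show ?thesis using True unfolding rank_of_def by blast
    qed
    moreover have "Card_order (cardSuc (card_of X))" using cardSuc_Card_order[OF CX] .
    moreover have "cardSuc (card_of X) \<le>o cardSuc (card_of X)" using ordLeq_refl[OF cardSuc_Card_order[OF CX]] .
    ultimately show ?thesis by blast
  next
    case False
    then obtain \<beta>1 where "\<beta>1 \<in> PX X - I" using IS by blast
    then have "|\<beta>1| \<in> card_of ` (PX X - I)" by blast
    then obtain z where z: "z \<in> card_of ` (PX X - I)" "\<And>y. (y, z) \<in> ordLess \<Longrightarrow> y \<notin> card_of ` (PX X - I)"
      using wfE_min[OF wf_ordLess] by metis
    then obtain \<beta>0 where b0: "\<beta>0 \<in> PX X" "\<beta>0 \<notin> I" "z = |\<beta>0|" by blast
    define \<xi> where "\<xi> = |dom_of \<beta>0|"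
    have xi_iso: "|\<beta>0| =o \<xi>" unfolding \<xi>_def using card_dom[OF b0(1)] .
    have "Card_order \<xi>" unfolding \<xi>_def by (rule card_of_Card_order)
    moreover have "\<xi> \<le>o cardSuc (card_of X)"
    proof -
      have "\<xi> \<le>o |X|" using ordIso_ordLeq_trans[OF ordIso_symmetric[OF xi_iso] rank_le_X[OF b0(1)]] .
      then have "\<xi> <o cardSuc (card_of X)" using cardSuc_greater[OF CX] ordLeq_ordLess_trans by blast
      then show ?thesis using ordLess_imp_ordLeq by blast
    qed
    moreover have "I = {\<alpha>\<in>PX X. (rank_of \<alpha>, \<xi>) \<in> ordLess}"
    proof
      show "I \<subseteq> {\<alpha>\<in>PX X. (rank_of \<alpha>, \<xi>) \<in> ordLess}"
      proof
        fix \<alpha> assume aI: "\<alpha> \<in> I"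
        have aS: "\<alpha> \<in> PX X" using aI IS by blast
        have "|\<alpha>| <o \<xi>"
        proof (rule ccontr)
          assume "\<not> |\<alpha>| <o \<xi>"
          then have "\<xi> \<le>o |\<alpha>|"
            using not_ordLeq_iff_ordLess[OF card_of_Well_order card_of_Well_order, of "dom_of \<beta>0" \<alpha>]
            unfolding \<xi>_def by blast
          then have "|\<beta>0| \<le>o |\<alpha>|" using ordIso_ordLeq_trans[OF xi_iso] by blast
          then have "\<beta>0 \<in> I" using down[OF aI b0(1)] by blast
          then show False using b0(2) by blast
        qed
        then show "\<alpha> \<in> {\<alpha>\<in>PX X. (rank_of \<alpha>, \<xi>) \<in> ordLess}" using aS unfolding rank_of_def by blast
      qed
    next
      show "{\<alpha>\<in>PX X. (rank_of \<alpha>, \<xi>) \<in> ordLess} \<subseteq> I"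
      proof
        fix \<alpha> assume "\<alpha> \<in> {\<alpha>\<in>PX X. (rank_of \<alpha>, \<xi>) \<in> ordLess}"
        then have aS: "\<alpha> \<in> PX X" and lt: "|\<alpha>| <o \<xi>" unfolding rank_of_def by auto
        have "|\<alpha>| <o |\<beta>0|" using ordLess_ordIso_trans[OF lt ordIso_symmetric[OF xi_iso]] .
        then have "|\<alpha>| \<notin> card_of ` (PX X - I)" using z(2) b0(3) by blast
        then show "\<alpha> \<in> I" using aS by blast
      qed
    qed
    ultimately show ?thesis by blast
  qed
qed

theorem main_good:
  fixes X :: "'a set" and mult :: "'a bip \<Rightarrow> 'a bip \<Rightarrow> 'a bip"
  assumes m: "good X mult"
  shows "(\<forall>a\<in>PX X. \<forall>b\<in>PX X. greenR (PX X) mult a b \<longleftrightarrow> dom_of a = dom_of b)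
       \<and> (\<forall>a\<in>PX X. \<forall>b\<in>PX X. greenL (PX X) mult a b \<longleftrightarrow> ran_of a = ran_of b)
       \<and> (\<forall>a\<in>PX X. \<forall>b\<in>PX X.
            (greenD (PX X) mult a b \<longleftrightarrow> greenJ (PX X) mult a b)
          \<and> (greenJ (PX X) mult a b \<longleftrightarrow> (rank_of a, rank_of b) \<in> ordIso))
       \<and> (\<forall>I. is_ideal (PX X) mult I \<longrightarrow>
            (\<exists>\<xi> :: 'a set rel. Card_order \<xi> \<and> (\<xi>, cardSuc (card_of X)) \<in> ordLeq \<and>
               I = {\<alpha>\<in>PX X. (rank_of \<alpha>, \<xi>) \<in> ordLess}))"
  using R_iff[OF m] L_iff[OF m] D_iff[OF m] J_iff[OF m] ideal_form[OF m]
  unfolding rank_of_def by blast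




lemma edgeA: "(A,B) \<in> \<alpha> \<Longrightarrow> u \<in> T ` A \<union> M ` B \<Longrightarrow> v \<in> T ` A \<union> M ` B \<Longrightarrow> (u,v) \<in> star_edges \<alpha> \<beta>"
  unfolding star_edges_def by blast
lemma edgeE:
  assumes "(u,v) \<in> star_edges \<alpha> \<beta>"
  obtains A B where "(A,B) \<in> \<alpha>" "u \<in> T ` A \<union> M ` B" "v \<in> T ` A \<union> M ` B"
  | B D where "(B,D) \<in> \<beta>" "u \<in> M ` B \<union> Bt ` D" "v \<in> M ` B \<union> Bt ` D"
  using assms unfolding star_edges_def by blast
lemma edgeB: "(B,D) \<in> \<beta> \<Longrightarrow> u \<in> M ` B \<union> Bt ` D \<Longrightarrow> v \<in> M ` B \<union> Bt ` D \<Longrightarrow> (u,v) \<in> star_edges \<alpha> \<beta>"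
  unfolding star_edges_def by blast

lemma edges_sym: assumes "(u,v) \<in> star_edges \<alpha> \<beta>" shows "(v,u) \<in> star_edges \<alpha> \<beta>"
  using assms
proof (cases rule: edgeE)
  case (1 A B) then show ?thesis using edgeA by metis
next
  case (2 B D) then show ?thesis using edgeB by metis
qed

lemma rt_sym: assumes "(u,v) \<in> (star_edges \<alpha> \<beta>)\<^sup>*" shows "(v,u) \<in> (star_edges \<alpha> \<beta>)\<^sup>*"
  using assms
proof (induction rule: rtrancl_induct)
  case base then show ?case by simp
next
  case (step y z)
  have "(z,y) \<in> (star_edges \<alpha> \<beta>)\<^sup>*" using edges_sym[OF step(2)] by blast
  then show ?case using step(3) by (rule rtrancl_trans)
qed

lemma class_eq: assumes "v \<in> star_class \<alpha> \<beta> u" shows "star_class \<alpha> \<beta> v = star_class \<alpha> \<beta> u"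
proof -
  have uv: "(u,v) \<in> (star_edges \<alpha> \<beta>)\<^sup>*" using assms unfolding star_class_def by simp
  have vu: "(v,u) \<in> (star_edges \<alpha> \<beta>)\<^sup>*" using rt_sym[OF uv] .
  show ?thesis unfolding star_class_def
  proof (intro set_eqI iffI; simp)
    fix w assume "(v,w) \<in> (star_edges \<alpha> \<beta>)\<^sup>*" then show "(u,w) \<in> (star_edges \<alpha> \<beta>)\<^sup>*" using uv by (meson rtrancl_trans)
  next
    fix w assume "(u,w) \<in> (star_edges \<alpha> \<beta>)\<^sup>*" then show "(v,w) \<in> (star_edges \<alpha> \<beta>)\<^sup>*" using vu by (meson rtrancl_trans)
  qed
qed

lemma class_self: "u \<in> star_class \<alpha> \<beta> u" unfolding star_class_def by simp

lemma class_step: "v \<in> star_class \<alpha> \<beta> u \<Longrightarrow> (v,w) \<in> star_edges \<alpha> \<beta> \<Longrightarrow> w \<in> star_class \<alpha> \<beta> u"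
  unfolding star_class_def by (simp add: rtrancl_into_rtrancl)

lemma star_E:
  assumes "(P,Q) \<in> star X \<alpha> \<beta>"
  obtains u where "u \<in> T ` X \<union> Bt ` X" "P = {x\<in>X. T x \<in> star_class \<alpha> \<beta> u}"
    "Q = {x\<in>X. Bt x \<in> star_class \<alpha> \<beta> u}" "\<forall>w\<in>star_class \<alpha> \<beta> u. \<not> is_point X \<alpha> \<beta> w"
    "P \<noteq> {}" "Q \<noteq> {}"
  using assms unfolding star_def by blast

lemma star_I:
  assumes "u \<in> T ` X \<union> Bt ` X" "P = {x\<in>X. T x \<in> star_class \<alpha> \<beta> u}"
    "Q = {x\<in>X. Bt x \<in> star_class \<alpha> \<beta> u}" "\<forall>w\<in>star_class \<alpha> \<beta> u. \<not> is_point X \<alpha> \<beta> w"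
    "P \<noteq> {}" "Q \<noteq> {}"
  shows "(P,Q) \<in> star X \<alpha> \<beta>"
  unfolding star_def using assms by blast

lemma notpoint_T:
  assumes "\<not> is_point X \<alpha> \<beta> (T x)" "x \<in> X"
  obtains A B where "(A,B) \<in> \<alpha>" "x \<in> A"
  using assms unfolding is_point_def by blast

lemma notpoint_Bt:
  assumes "\<not> is_point X \<alpha> \<beta> (Bt x)" "x \<in> X"
  obtains B D where "(B,D) \<in> \<beta>" "x \<in> D"
  using assms unfolding is_point_def by blast

lemma notpoint_M:
  assumes "\<not> is_point X \<alpha> \<beta> (M x)" "x \<in> X"
  obtains A B B' D where "(A,B) \<in> \<alpha>" "x \<in> B" "(B',D) \<in> \<beta>" "x \<in> B'"
  using assms unfolding is_point_def by blast

lemma star_fst: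
  assumes a: "\<alpha> \<in> PX X" and L: "(P,Q) \<in> star X \<alpha> \<beta>" and x: "x \<in> P"
  shows "\<exists>A B. (A,B)\<in>\<alpha> \<and> x\<in>A \<and> A \<subseteq> P"
proof -
  obtain u where u: "P = {x\<in>X. T x \<in> star_class \<alpha> \<beta> u}" "\<forall>w\<in>star_class \<alpha> \<beta> u. \<not> is_point X \<alpha> \<beta> w"
    using star_E[OF L] by metis
  have xX: "x \<in> X" "T x \<in> star_class \<alpha> \<beta> u" using x u(1) by auto
  then obtain A B where AB: "(A,B) \<in> \<alpha>" "x \<in> A" using u(2) notpoint_T by metis
  have "A \<subseteq> P"
  proof
    fix y assume y: "y \<in> A"
    have "(T x, T y) \<in> star_edges \<alpha> \<beta>" using edgeA[OF AB(1)] AB(2) y by blast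
    then have "T y \<in> star_class \<alpha> \<beta> u" using class_step xX(2) by metis
    moreover have "y \<in> X" using PX_D(3)[OF a AB(1)] y by blast
    ultimately show "y \<in> P" using u(1) by blast
  qed
  then show ?thesis using AB by blast
qed

lemma star_snd:
  assumes b: "\<beta> \<in> PX X" and L: "(P,Q) \<in> star X \<alpha> \<beta>" and z: "z \<in> Q"
  shows "\<exists>B D. (B,D)\<in>\<beta> \<and> z\<in>D \<and> D \<subseteq> Q"
proof -
  obtain u where u: "Q = {x\<in>X. Bt x \<in> star_class \<alpha> \<beta> u}" "\<forall>w\<in>star_class \<alpha> \<beta> u. \<not> is_point X \<alpha> \<beta> w"
    using star_E[OF L] by metis
  have zX: "z \<in> X" "Bt z \<in> star_class \<alpha> \<beta> u" using z u(1) by auto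
  then obtain B D where BD: "(B,D) \<in> \<beta>" "z \<in> D" using u(2) notpoint_Bt by metis
  have "D \<subseteq> Q"
  proof
    fix y assume y: "y \<in> D"
    have "(Bt z, Bt y) \<in> star_edges \<alpha> \<beta>" using edgeB[OF BD(1)] BD(2) y by blast
    then have "Bt y \<in> star_class \<alpha> \<beta> u" using class_step zX(2) by metis
    moreover have "y \<in> X" using PX_D(4)[OF b BD(1)] y by blast
    ultimately show "y \<in> Q" using u(1) by blast
  qed
  then show ?thesis using BD by blast
qed

lemma star_PX:
  assumes a: "\<alpha> \<in> PX X" and b: "\<beta> \<in> PX X"
  shows "star X \<alpha> \<beta> \<in> PX X"
proof (rule PX_I)
  fix P Q assume "(P,Q) \<in> star X \<alpha> \<beta>"
  then show "P \<noteq> {} \<and> Q \<noteq> {} \<and> P \<subseteq> X \<and> Q \<subseteq> X" by (rule star_E) auto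
next
  fix P Q P' Q' x y assume h: "(P,Q) \<in> star X \<alpha> \<beta>" "(P',Q') \<in> star X \<alpha> \<beta>"
    "(x \<in> P \<and> x \<in> P') \<or> (y \<in> Q \<and> y \<in> Q')"
  obtain u where u: "P = {x\<in>X. T x \<in> star_class \<alpha> \<beta> u}" "Q = {x\<in>X. Bt x \<in> star_class \<alpha> \<beta> u}"
    using star_E[OF h(1)] by metis
  obtain u' where u': "P' = {x\<in>X. T x \<in> star_class \<alpha> \<beta> u'}" "Q' = {x\<in>X. Bt x \<in> star_class \<alpha> \<beta> u'}"
    using star_E[OF h(2)] by metis
  have "\<exists>w. w \<in> star_class \<alpha> \<beta> u \<and> w \<in> star_class \<alpha> \<beta> u'" using h(3) u u' by blast
  then have "star_class \<alpha> \<beta> u = star_class \<alpha> \<beta> u'" using class_eq by metis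
  then show "P = P' \<and> Q = Q'" using u u' by simp
qed




lemma np_T: "(A,B) \<in> \<alpha> \<Longrightarrow> x \<in> A \<Longrightarrow> \<not> is_point X \<alpha> \<beta> (T x)"
  unfolding is_point_def by auto
lemma np_Bt: "(B,D) \<in> \<beta> \<Longrightarrow> x \<in> D \<Longrightarrow> \<not> is_point X \<alpha> \<beta> (Bt x)"
  unfolding is_point_def by auto
lemma np_M: "(A,B) \<in> \<alpha> \<Longrightarrow> y \<in> B \<Longrightarrow> (B',D) \<in> \<beta> \<Longrightarrow> y \<in> B' \<Longrightarrow> \<not> is_point X \<alpha> \<beta> (M y)"
  unfolding is_point_def by auto

definition Aset :: "'a bip \<Rightarrow> 'a set \<Rightarrow> 'a set" where
  "Aset \<alpha> B' = \<Union>{A. \<exists>B. (A,B) \<in> \<alpha> \<and> B \<subseteq> B'}"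

lemma Aset_iff: "x \<in> Aset \<alpha> B' \<longleftrightarrow> (\<exists>A B. (A,B) \<in> \<alpha> \<and> B \<subseteq> B' \<and> x \<in> A)"
  unfolding Aset_def by blast

lemma rt_conn:
  assumes "(u,w) \<in> (star_edges \<alpha> \<beta>)\<^sup>*" "(v,w) \<in> (star_edges \<alpha> \<beta>)\<^sup>*"
  shows "(u,v) \<in> (star_edges \<alpha> \<beta>)\<^sup>*"
  using assms(1) rt_sym[OF assms(2)] by (rule rtrancl_trans)

lemma class_is_K:
  assumes "\<And>u v. u \<in> K \<Longrightarrow> (u,v) \<in> star_edges \<alpha> \<beta> \<Longrightarrow> v \<in> K"
    and "\<And>u. u \<in> K \<Longrightarrow> (u, wz) \<in> (star_edges \<alpha> \<beta>)\<^sup>*"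
    and "u \<in> K"
  shows "star_class \<alpha> \<beta> u = K"
proof
  show "star_class \<alpha> \<beta> u \<subseteq> K"
  proof
    fix v assume "v \<in> star_class \<alpha> \<beta> u"
    then have "(u,v) \<in> (star_edges \<alpha> \<beta>)\<^sup>*" unfolding star_class_def by simp
    then show "v \<in> K"
    proof (induction rule: rtrancl_induct)
      case base then show ?case using assms(3) .
    next
      case (step y z) then show ?case using assms(1) by blast
    qed
  qed
  show "K \<subseteq> star_class \<alpha> \<beta> u"
  proof
    fix v assume "v \<in> K"
    then have "(u,v) \<in> (star_edges \<alpha> \<beta>)\<^sup>*" using rt_conn assms(2,3) by metis
    then show "v \<in> star_class \<alpha> \<beta> u" unfolding star_class_def by simp
  qed
qed

lemma star_gen_R:
  fixes \<alpha> \<beta> :: "'a bip"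
  assumes a: "\<alpha> \<in> PX X" and b: "\<beta> \<in> PX X"
  and H1: "\<And>B' D y. (B',D) \<in> \<beta> \<Longrightarrow> y \<in> B' \<Longrightarrow> \<exists>A B. (A,B) \<in> \<alpha> \<and> y \<in> B \<and> B \<subseteq> B'"
  and H2: "\<And>A B B' D. (A,B) \<in> \<alpha> \<Longrightarrow> (B',D) \<in> \<beta> \<Longrightarrow> B \<inter> B' \<noteq> {} \<Longrightarrow> B \<subseteq> B'"
  shows "star X \<alpha> \<beta> = (\<lambda>p. (Aset \<alpha> (fst p), snd p)) ` \<beta>"
proof -
  define K where "K = (\<lambda>B' D. T ` Aset \<alpha> B' \<union> M ` B' \<union> Bt ` D)"
  have Kcl: "star_class \<alpha> \<beta> u = K B' D" if BD: "(B',D) \<in> \<beta>" and u: "u \<in> K B' D" for B' D u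
  proof -
    obtain y0 where y0: "y0 \<in> B'" using PX_D(1)[OF b BD] by blast
    show ?thesis
    proof (rule class_is_K[where wz = "M y0"])
      fix u v assume u: "u \<in> K B' D" and e: "(u,v) \<in> star_edges \<alpha> \<beta>"
      from e show "v \<in> K B' D"
      proof (cases rule: edgeE)
        case (1 A1 B1)
        have "B1 \<subseteq> B'"
        proof (cases u)
          case (T x)
          then have "x \<in> A1" "x \<in> Aset \<alpha> B'" using 1 u unfolding K_def by auto
          then obtain A2 B2 where "(A2,B2) \<in> \<alpha>" "B2 \<subseteq> B'" "x \<in> A2" unfolding Aset_iff by blast
          then show ?thesis using PX_disjA[OF a 1(1), of A2 B2 x] \<open>x \<in> A1\<close> by blast
        next
          case (M y)
          then have "y \<in> B1" "y \<in> B'" using 1 u unfolding K_def by auto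
          then show ?thesis using H2[OF 1(1) BD] by blast
        next
          case (Bt z) then show ?thesis using 1 by auto
        qed
        then have "A1 \<subseteq> Aset \<alpha> B'" using 1(1) unfolding Aset_def by blast
        then show ?thesis using 1(3) \<open>B1 \<subseteq> B'\<close> unfolding K_def by blast
      next
        case (2 B1 D1)
        have "B1 = B' \<and> D1 = D"
        proof (cases u)
          case (T x) then show ?thesis using 2 by auto
        next
          case (M y)
          then have "y \<in> B1" "y \<in> B'" using 2 u unfolding K_def by auto
          then show ?thesis using PX_disjA[OF b 2(1) BD] by blast
        next
          case (Bt z)
          then have "z \<in> D1" "z \<in> D" using 2 u unfolding K_def by auto
          then show ?thesis using PX_disjB[OF b 2(1) BD] by blast
        qed
        then show ?thesis using 2(3) unfolding K_def by blast
      qed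
    next
      fix u assume u: "u \<in> K B' D"
      have my: "(M y, M y0) \<in> star_edges \<alpha> \<beta>" if "y \<in> B'" for y
        using edgeB[OF BD] that y0 by blast
      show "(u, M y0) \<in> (star_edges \<alpha> \<beta>)\<^sup>*"
      proof (cases u)
        case (T x)
        then have "x \<in> Aset \<alpha> B'" using u unfolding K_def by auto
        then obtain A B where AB: "(A,B) \<in> \<alpha>" "B \<subseteq> B'" "x \<in> A" unfolding Aset_iff by blast
        obtain y where y: "y \<in> B" using PX_D(2)[OF a AB(1)] by blast
        have "(T x, M y) \<in> star_edges \<alpha> \<beta>" using edgeA[OF AB(1)] AB(3) y by blast
        moreover have "(M y, M y0) \<in> star_edges \<alpha> \<beta>" using my y AB(2) by blast
        ultimately show ?thesis using T by (meson converse_rtrancl_into_rtrancl r_into_rtrancl)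
      next
        case (M y)
        then have "y \<in> B'" using u unfolding K_def by auto
        then show ?thesis using my M by blast
      next
        case (Bt z)
        then have "z \<in> D" using u unfolding K_def by auto
        then have "(Bt z, M y0) \<in> star_edges \<alpha> \<beta>" using edgeB[OF BD] y0 by blast
        then show ?thesis using Bt by blast
      qed
    next
      show "u \<in> K B' D" using u .
    qed
  qed
  have Knp: "\<not> is_point X \<alpha> \<beta> w" if BD: "(B',D) \<in> \<beta>" and w: "w \<in> K B' D" for B' D w
  proof (cases w)
    case (T x)
    then have "x \<in> Aset \<alpha> B'" using w unfolding K_def by auto
    then obtain A B where AB: "(A,B) \<in> \<alpha>" "x \<in> A" unfolding Aset_iff by blast
    then show ?thesis using T np_T by metis
  next
    case (M y)
    then have y: "y \<in> B'" using w unfolding K_def by auto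
    then obtain A B where "(A,B) \<in> \<alpha>" "y \<in> B" using H1[OF BD] by blast
    then show ?thesis using M np_M BD y by metis
  next
    case (Bt z)
    then have "z \<in> D" using w unfolding K_def by auto
    then show ?thesis using Bt np_Bt BD by metis
  qed
  have AsetX: "Aset \<alpha> B' \<subseteq> X" for B'
    unfolding Aset_def using PX_D(3)[OF a] by blast
  have trT: "{x\<in>X. T x \<in> K B' D} = Aset \<alpha> B'" for B' D
    using AsetX unfolding K_def by auto
  have trB: "{x\<in>X. Bt x \<in> K B' D} = D" if "(B',D) \<in> \<beta>" for B' D
    using PX_D(4)[OF b that] unfolding K_def by auto
  show ?thesis
  proof
    show "star X \<alpha> \<beta> \<subseteq> (\<lambda>p. (Aset \<alpha> (fst p), snd p)) ` \<beta>"
    proof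
      fix L assume L: "L \<in> star X \<alpha> \<beta>"
      obtain P Q where PQ: "L = (P,Q)" by (cases L)
      obtain u where u: "u \<in> T ` X \<union> Bt ` X" "P = {x\<in>X. T x \<in> star_class \<alpha> \<beta> u}"
        "Q = {x\<in>X. Bt x \<in> star_class \<alpha> \<beta> u}" "\<forall>w\<in>star_class \<alpha> \<beta> u. \<not> is_point X \<alpha> \<beta> w"
        "P \<noteq> {}" "Q \<noteq> {}"
        by (rule star_E[OF L[unfolded PQ]])
      have "\<exists>B1 D1. (B1,D1) \<in> \<beta> \<and> u \<in> K B1 D1"
      proof (cases u)
        case (T x)
        then have xX: "x \<in> X" using u(1) by auto
        have np: "\<not> is_point X \<alpha> \<beta> (T x)" using u(4) class_self[of u \<alpha> \<beta>] T by simp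
        obtain A B where AB: "(A,B) \<in> \<alpha>" "x \<in> A" using notpoint_T[OF np xX] by blast
        obtain y where y: "y \<in> B" using PX_D(2)[OF a AB(1)] by blast
        have yX: "y \<in> X" using PX_D(4)[OF a AB(1)] y by blast
        have e: "(T x, M y) \<in> star_edges \<alpha> \<beta>" using edgeA[OF AB(1)] AB(2) y by blast
        have "M y \<in> star_class \<alpha> \<beta> (T x)" using class_step[OF class_self e] .
        then have np2: "\<not> is_point X \<alpha> \<beta> (M y)" using u(4) T by simp
        obtain A' B'' B1 D1 where "(A',B'') \<in> \<alpha>" "y \<in> B''" "(B1,D1) \<in> \<beta>" "y \<in> B1"
          using notpoint_M[OF np2 yX] by blast
        have "B \<subseteq> B1" using H2[OF AB(1) \<open>(B1,D1) \<in> \<beta>\<close>] y \<open>y \<in> B1\<close> by blast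
        then have "x \<in> Aset \<alpha> B1" using AB unfolding Aset_iff by blast
        then show ?thesis using T \<open>(B1,D1) \<in> \<beta>\<close> unfolding K_def by blast
      next
        case (M y) then show ?thesis using u(1) by auto
      next
        case (Bt z)
        then have zX: "z \<in> X" using u(1) by auto
        have np: "\<not> is_point X \<alpha> \<beta> (Bt z)" using u(4) class_self[of u \<alpha> \<beta>] Bt by simp
        obtain B1 D1 where "(B1,D1) \<in> \<beta>" "z \<in> D1" using notpoint_Bt[OF np zX] by blast
        then show ?thesis using Bt unfolding K_def by blast
      qed
      then obtain B1 D1 where BD: "(B1,D1) \<in> \<beta>" "u \<in> K B1 D1" by blast
      have "star_class \<alpha> \<beta> u = K B1 D1" using Kcl[OF BD] .
      then have "P = Aset \<alpha> B1" "Q = D1" using u(2,3) trT trB[OF BD(1)] by simp_all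
      then show "L \<in> (\<lambda>p. (Aset \<alpha> (fst p), snd p)) ` \<beta>" using PQ BD(1) by force
    qed
  next
    show "(\<lambda>p. (Aset \<alpha> (fst p), snd p)) ` \<beta> \<subseteq> star X \<alpha> \<beta>"
    proof
      fix L assume "L \<in> (\<lambda>p. (Aset \<alpha> (fst p), snd p)) ` \<beta>"
      then obtain B' D where BD: "(B',D) \<in> \<beta>" "L = (Aset \<alpha> B', D)" by force
      obtain z where z: "z \<in> D" using PX_D(2)[OF b BD(1)] by blast
      have zX: "z \<in> X" using PX_D(4)[OF b BD(1)] z by blast
      have uK: "Bt z \<in> K B' D" using z unfolding K_def by blast
      have cl: "star_class \<alpha> \<beta> (Bt z) = K B' D" using Kcl[OF BD(1) uK] .
      obtain y where y: "y \<in> B'" using PX_D(1)[OF b BD(1)] by blast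
      obtain A B where AB: "(A,B) \<in> \<alpha>" "y \<in> B" "B \<subseteq> B'" using H1[OF BD(1) y] by blast
      have "A \<subseteq> Aset \<alpha> B'" using AB unfolding Aset_def by blast
      then have ne: "Aset \<alpha> B' \<noteq> {}" using PX_D(1)[OF a AB(1)] by blast
      have "(Aset \<alpha> B', D) \<in> star X \<alpha> \<beta>"
      proof (rule star_I[where u = "Bt z"])
        show "Bt z \<in> T ` X \<union> Bt ` X" using zX by blast
        show "Aset \<alpha> B' = {x\<in>X. T x \<in> star_class \<alpha> \<beta> (Bt z)}" using cl trT by simp
        show "D = {x\<in>X. Bt x \<in> star_class \<alpha> \<beta> (Bt z)}" using cl trB[OF BD(1)] by simp
        show "\<forall>w\<in>star_class \<alpha> \<beta> (Bt z). \<not> is_point X \<alpha> \<beta> w" using cl Knp[OF BD(1)] by blast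
        show "Aset \<alpha> B' \<noteq> {}" using ne .
        show "D \<noteq> {}" using z by blast
      qed
      then show "L \<in> star X \<alpha> \<beta>" using BD(2) by simp
    qed
  qed
qed




definition Dset :: "'a bip \<Rightarrow> 'a set \<Rightarrow> 'a set" where
  "Dset \<beta> B = \<Union>{D. \<exists>B1. (B1,D) \<in> \<beta> \<and> B1 \<subseteq> B}"

lemma Dset_iff: "x \<in> Dset \<beta> B \<longleftrightarrow> (\<exists>B1 D. (B1,D) \<in> \<beta> \<and> B1 \<subseteq> B \<and> x \<in> D)"
  unfolding Dset_def by blast

lemma star_gen_L:
  fixes \<alpha> \<beta> :: "'a bip"
  assumes a: "\<alpha> \<in> PX X" and b: "\<beta> \<in> PX X"
  and H1: "\<And>A B y. (A,B) \<in> \<alpha> \<Longrightarrow> y \<in> B \<Longrightarrow> \<exists>B1 D1. (B1,D1) \<in> \<beta> \<and> y \<in> B1 \<and> B1 \<subseteq> B"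
  and H2: "\<And>B1 D1 A B. (B1,D1) \<in> \<beta> \<Longrightarrow> (A,B) \<in> \<alpha> \<Longrightarrow> B1 \<inter> B \<noteq> {} \<Longrightarrow> B1 \<subseteq> B"
  shows "star X \<alpha> \<beta> = (\<lambda>p. (fst p, Dset \<beta> (snd p))) ` \<alpha>"
proof -
  define K where "K = (\<lambda>A B. T ` A \<union> M ` B \<union> Bt ` Dset \<beta> B)"
  have Kcl: "star_class \<alpha> \<beta> u = K A B" if AB: "(A,B) \<in> \<alpha>" and u: "u \<in> K A B" for A B u
  proof -
    obtain y0 where y0: "y0 \<in> B" using PX_D(2)[OF a AB] by blast
    show ?thesis
    proof (rule class_is_K[where wz = "M y0"])
      fix u v assume u: "u \<in> K A B" and e: "(u,v) \<in> star_edges \<alpha> \<beta>"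
      from e show "v \<in> K A B"
      proof (cases rule: edgeE)
        case (1 A1 B1)
        have "A1 = A \<and> B1 = B"
        proof (cases u)
          case (T x)
          then have "x \<in> A1" "x \<in> A" using 1 u unfolding K_def by auto
          then show ?thesis using PX_disjA[OF a 1(1) AB] by blast
        next
          case (M y)
          then have "y \<in> B1" "y \<in> B" using 1 u unfolding K_def by auto
          then show ?thesis using PX_disjB[OF a 1(1) AB] by blast
        next
          case (Bt z) then show ?thesis using 1 by auto
        qed
        then show ?thesis using 1(3) unfolding K_def by blast
      next
        case (2 B1 D1)
        have "B1 \<subseteq> B"
        proof (cases u)
          case (T x) then show ?thesis using 2 by auto
        next
          case (M y)
          then have "y \<in> B1" "y \<in> B" using 2 u unfolding K_def by auto
          then show ?thesis using H2[OF 2(1) AB] by blast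
        next
          case (Bt z)
          then have "z \<in> D1" "z \<in> Dset \<beta> B" using 2 u unfolding K_def by auto
          then obtain B2 D2 where "(B2,D2) \<in> \<beta>" "B2 \<subseteq> B" "z \<in> D2" unfolding Dset_iff by blast
          then show ?thesis using PX_disjB[OF b 2(1), of B2 D2 z] \<open>z \<in> D1\<close> by blast
        qed
        then have "D1 \<subseteq> Dset \<beta> B" using 2(1) unfolding Dset_def by blast
        then show ?thesis using 2(3) \<open>B1 \<subseteq> B\<close> unfolding K_def by blast
      qed
    next
      fix u assume u: "u \<in> K A B"
      have my: "(M y, M y0) \<in> star_edges \<alpha> \<beta>" if "y \<in> B" for y
        using edgeA[OF AB] that y0 by blast
      show "(u, M y0) \<in> (star_edges \<alpha> \<beta>)\<^sup>*"
      proof (cases u)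
        case (T x)
        then have "x \<in> A" using u unfolding K_def by auto
        then have "(T x, M y0) \<in> star_edges \<alpha> \<beta>" using edgeA[OF AB] y0 by blast
        then show ?thesis using T by blast
      next
        case (M y)
        then have "y \<in> B" using u unfolding K_def by auto
        then show ?thesis using my M by blast
      next
        case (Bt z)
        then have "z \<in> Dset \<beta> B" using u unfolding K_def by auto
        then obtain B1 D1 where BD: "(B1,D1) \<in> \<beta>" "B1 \<subseteq> B" "z \<in> D1" unfolding Dset_iff by blast
        obtain y where y: "y \<in> B1" using PX_D(1)[OF b BD(1)] by blast
        have "(Bt z, M y) \<in> star_edges \<alpha> \<beta>" using edgeB[OF BD(1)] BD(3) y by blast
        moreover have "(M y, M y0) \<in> star_edges \<alpha> \<beta>" using my y BD(2) by blast
        ultimately show ?thesis using Bt by (meson converse_rtrancl_into_rtrancl r_into_rtrancl)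
      qed
    next
      show "u \<in> K A B" using u .
    qed
  qed
  have Knp: "\<not> is_point X \<alpha> \<beta> w" if AB: "(A,B) \<in> \<alpha>" and w: "w \<in> K A B" for A B w
  proof (cases w)
    case (T x)
    then have "x \<in> A" using w unfolding K_def by auto
    then show ?thesis using T np_T AB by metis
  next
    case (M y)
    then have y: "y \<in> B" using w unfolding K_def by auto
    then obtain B1 D1 where "(B1,D1) \<in> \<beta>" "y \<in> B1" using H1[OF AB] by blast
    then show ?thesis using M np_M AB y by metis
  next
    case (Bt z)
    then have "z \<in> Dset \<beta> B" using w unfolding K_def by auto
    then obtain B1 D1 where "(B1,D1) \<in> \<beta>" "z \<in> D1" unfolding Dset_iff by blast
    then show ?thesis using Bt np_Bt by metis
  qed
  have DsetX: "Dset \<beta> B \<subseteq> X" for B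
    unfolding Dset_def using PX_D(4)[OF b] by blast
  have trB: "{x\<in>X. Bt x \<in> K A B} = Dset \<beta> B" for A B
    using DsetX unfolding K_def by auto
  have trT: "{x\<in>X. T x \<in> K A B} = A" if "(A,B) \<in> \<alpha>" for A B
    using PX_D(3)[OF a that] unfolding K_def by auto
  show ?thesis
  proof
    show "star X \<alpha> \<beta> \<subseteq> (\<lambda>p. (fst p, Dset \<beta> (snd p))) ` \<alpha>"
    proof
      fix L assume L: "L \<in> star X \<alpha> \<beta>"
      obtain P Q where PQ: "L = (P,Q)" by (cases L)
      obtain u where u: "u \<in> T ` X \<union> Bt ` X" "P = {x\<in>X. T x \<in> star_class \<alpha> \<beta> u}"
        "Q = {x\<in>X. Bt x \<in> star_class \<alpha> \<beta> u}" "\<forall>w\<in>star_class \<alpha> \<beta> u. \<not> is_point X \<alpha> \<beta> w"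
        "P \<noteq> {}" "Q \<noteq> {}"
        by (rule star_E[OF L[unfolded PQ]])
      have "\<exists>A B. (A,B) \<in> \<alpha> \<and> u \<in> K A B"
      proof (cases u)
        case (T x)
        then have xX: "x \<in> X" using u(1) by auto
        have np: "\<not> is_point X \<alpha> \<beta> (T x)" using u(4) class_self[of u \<alpha> \<beta>] T by simp
        obtain A B where AB: "(A,B) \<in> \<alpha>" "x \<in> A" using notpoint_T[OF np xX] by blast
        then show ?thesis using T unfolding K_def by blast
      next
        case (M y) then show ?thesis using u(1) by auto
      next
        case (Bt z)
        then have zX: "z \<in> X" using u(1) by auto
        have np: "\<not> is_point X \<alpha> \<beta> (Bt z)" using u(4) class_self[of u \<alpha> \<beta>] Bt by simp
        obtain B1 D1 where BD: "(B1,D1) \<in> \<beta>" "z \<in> D1" using notpoint_Bt[OF np zX] by blast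
        obtain y where y: "y \<in> B1" using PX_D(1)[OF b BD(1)] by blast
        have yX: "y \<in> X" using PX_D(3)[OF b BD(1)] y by blast
        have e: "(Bt z, M y) \<in> star_edges \<alpha> \<beta>" using edgeB[OF BD(1)] BD(2) y by blast
        have "M y \<in> star_class \<alpha> \<beta> (Bt z)" using class_step[OF class_self e] .
        then have np2: "\<not> is_point X \<alpha> \<beta> (M y)" using u(4) Bt by simp
        obtain A B B' D' where AB: "(A,B) \<in> \<alpha>" "y \<in> B" "(B',D') \<in> \<beta>" "y \<in> B'"
          using notpoint_M[OF np2 yX] by blast
        have "B1 \<subseteq> B" using H2[OF BD(1) AB(1)] y AB(2) by blast
        then have "z \<in> Dset \<beta> B" using BD unfolding Dset_iff by blast
        then show ?thesis using Bt AB(1) unfolding K_def by blast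
      qed
      then obtain A B where AB: "(A,B) \<in> \<alpha>" "u \<in> K A B" by blast
      have "star_class \<alpha> \<beta> u = K A B" using Kcl[OF AB] .
      then have "P = A" "Q = Dset \<beta> B" using u(2,3) trT[OF AB(1)] trB by simp_all
      then show "L \<in> (\<lambda>p. (fst p, Dset \<beta> (snd p))) ` \<alpha>" using PQ AB(1) by force
    qed
  next
    show "(\<lambda>p. (fst p, Dset \<beta> (snd p))) ` \<alpha> \<subseteq> star X \<alpha> \<beta>"
    proof
      fix L assume "L \<in> (\<lambda>p. (fst p, Dset \<beta> (snd p))) ` \<alpha>"
      then obtain A B where AB: "(A,B) \<in> \<alpha>" "L = (A, Dset \<beta> B)" by force
      obtain x where x: "x \<in> A" using PX_D(1)[OF a AB(1)] by blast
      have xX: "x \<in> X" using PX_D(3)[OF a AB(1)] x by blast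
      have uK: "T x \<in> K A B" using x unfolding K_def by blast
      have cl: "star_class \<alpha> \<beta> (T x) = K A B" using Kcl[OF AB(1) uK] .
      obtain y where y: "y \<in> B" using PX_D(2)[OF a AB(1)] by blast
      obtain B1 D1 where BD: "(B1,D1) \<in> \<beta>" "y \<in> B1" "B1 \<subseteq> B" using H1[OF AB(1) y] by blast
      have "D1 \<subseteq> Dset \<beta> B" using BD unfolding Dset_def by blast
      then have ne: "Dset \<beta> B \<noteq> {}" using PX_D(2)[OF b BD(1)] by blast
      have "(A, Dset \<beta> B) \<in> star X \<alpha> \<beta>"
      proof (rule star_I[where u = "T x"])
        show "T x \<in> T ` X \<union> Bt ` X" using xX by blast
        show "A = {w\<in>X. T w \<in> star_class \<alpha> \<beta> (T x)}" using cl trT[OF AB(1)] by simp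
        show "Dset \<beta> B = {w\<in>X. Bt w \<in> star_class \<alpha> \<beta> (T x)}" using cl trB by simp
        show "\<forall>w\<in>star_class \<alpha> \<beta> (T x). \<not> is_point X \<alpha> \<beta> w" using cl Knp[OF AB(1)] by blast
        show "A \<noteq> {}" using x by blast
        show "Dset \<beta> B \<noteq> {}" using ne .
      qed
      then show "L \<in> star X \<alpha> \<beta>" using AB(2) by simp
    qed
  qed
qed




definition Bs :: "'a bip \<Rightarrow> 'a set \<Rightarrow> 'a set" where
  "Bs a P = \<Union>{B. \<exists>A. (A,B) \<in> a \<and> A \<subseteq> P}"
definition Bs' :: "'a bip \<Rightarrow> 'a set \<Rightarrow> 'a set" where
  "Bs' a Q = \<Union>{B. \<exists>D. (B,D) \<in> a \<and> D \<subseteq> Q}"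

lemma Bs_iff: "y \<in> Bs a P \<longleftrightarrow> (\<exists>A B. (A,B) \<in> a \<and> A \<subseteq> P \<and> y \<in> B)"
  unfolding Bs_def by blast
lemma Bs'_iff: "y \<in> Bs' a Q \<longleftrightarrow> (\<exists>B D. (B,D) \<in> a \<and> D \<subseteq> Q \<and> y \<in> B)"
  unfolding Bs'_def by blast

lemma star_R_cov:
  fixes a c :: "'a bip"
  assumes a: "a \<in> PX X" and c: "c \<in> PX X" and cov: "covd c a"
  shows "\<exists>s\<in>PX X. star X a s = c"
proof -
  define s where "s = (\<lambda>p. (Bs a (fst p), snd p)) ` c"
  have covP: "\<exists>A B. (A,B) \<in> a \<and> x \<in> A \<and> A \<subseteq> fst p"  if hp: "p \<in> c" "x \<in> fst p" for p x
  proof -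
    have "(fst p, snd p) \<in> c" using hp(1) by simp
    then have "fst p \<in> dom_of c" unfolding dom_of_def by blast
    then obtain A where "A \<in> dom_of a" "x \<in> A" "A \<subseteq> fst p" using cov hp(2) unfolding covd_def by blast
    then show ?thesis unfolding dom_of_def by blast
  qed
  have BsX: "Bs a P \<subseteq> X" for P unfolding Bs_def using PX_D(4)[OF a] by blast
  have uniq: "A1 \<subseteq> P" if "(A1,B1) \<in> a" "(A2,B2) \<in> a" "A2 \<subseteq> P" "y \<in> B1" "y \<in> B2" for A1 B1 A2 B2 P y
    using PX_disjB[OF a that(1,2,4,5)] that(3) by blast
  have sS: "s \<in> PX X"
  proof (rule PX_I)
    fix B' Q assume "(B',Q) \<in> s"
    then obtain p where p: "p \<in> c" "B' = Bs a (fst p)" "Q = snd p" unfolding s_def by force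
    obtain x where "x \<in> fst p" using PX_Dp(1)[OF c p(1)] by blast
    then obtain A B where AB: "(A,B) \<in> a" "A \<subseteq> fst p" using covP[OF p(1)] by blast
    then have "B \<subseteq> B'" using p(2) unfolding Bs_def by blast
    then have "B' \<noteq> {}" using PX_D(2)[OF a AB(1)] by blast
    then show "B' \<noteq> {} \<and> Q \<noteq> {} \<and> B' \<subseteq> X \<and> Q \<subseteq> X" using BsX p PX_Dp[OF c p(1)] by simp
  next
    fix B1 Q1 B2 Q2 x y assume h: "(B1,Q1) \<in> s" "(B2,Q2) \<in> s" "(x \<in> B1 \<and> x \<in> B2) \<or> (y \<in> Q1 \<and> y \<in> Q2)"
    obtain p where p: "p \<in> c" "B1 = Bs a (fst p)" "Q1 = snd p" using h(1) unfolding s_def by force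
    obtain q where q: "q \<in> c" "B2 = Bs a (fst q)" "Q2 = snd q" using h(2) unfolding s_def by force
    have "p = q"
    proof (cases "x \<in> B1 \<and> x \<in> B2")
      case True
      then have "x \<in> Bs a (fst p)" "x \<in> Bs a (fst q)" using p(2) q(2) by auto
      then obtain A1 C1 A2 C2 where "(A1,C1) \<in> a" "A1 \<subseteq> fst p" "x \<in> C1" "(A2,C2) \<in> a" "A2 \<subseteq> fst q" "x \<in> C2"
        unfolding Bs_iff by blast
      moreover then have "A1 = A2" using PX_disjB[OF a] by blast
      moreover obtain z where "z \<in> A1" using PX_D(1)[OF a \<open>(A1,C1) \<in> a\<close>] by blast
      ultimately show ?thesis using PX_eqA[OF c p(1) q(1), of z] by blast
    next
      case False
      then have "y \<in> snd p" "y \<in> snd q" using h(3) p q by auto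
      then show ?thesis using PX_eqB[OF c p(1) q(1)] by blast
    qed
    then show "B1 = B2 \<and> Q1 = Q2" using p q by simp
  qed
  have H1: "\<exists>A B. (A,B) \<in> a \<and> y \<in> B \<and> B \<subseteq> B'" if hh1: "(B',D) \<in> s" "y \<in> B'" for B' D y
  proof -
    obtain p where p: "p \<in> c" "B' = Bs a (fst p)" using hh1(1) unfolding s_def by force
    obtain A B where "(A,B) \<in> a" "A \<subseteq> fst p" "y \<in> B" using hh1(2) p(2) by (auto simp: Bs_iff)
    moreover then have "B \<subseteq> B'" using p(2) unfolding Bs_def by blast
    ultimately show ?thesis by blast
  qed
  have H2: "B \<subseteq> B'" if hh2: "(A,B) \<in> a" "(B',D) \<in> s" "B \<inter> B' \<noteq> {}" for A B B' D
  proof -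
    obtain p where p: "p \<in> c" "B' = Bs a (fst p)" using hh2(2) unfolding s_def by force
    obtain y where y: "y \<in> B" "y \<in> B'" using hh2(3) by blast
    obtain A2 B2 where "(A2,B2) \<in> a" "A2 \<subseteq> fst p" "y \<in> B2" using y(2) p(2) by (auto simp: Bs_iff)
    then have "A \<subseteq> fst p" using uniq[OF hh2(1)] y(1) by blast
    then show ?thesis using hh2(1) p(2) unfolding Bs_def by blast
  qed
  have eq: "star X a s = (\<lambda>p. (Aset a (fst p), snd p)) ` s"
    by (rule star_gen_R[OF a sS H1 H2])
  have AB: "Aset a (Bs a P) = P" if hab: "(P,Q) \<in> c" for P Q
  proof
    show "Aset a (Bs a P) \<subseteq> P"
    proof
      fix x assume "x \<in> Aset a (Bs a P)"
      then obtain A B where AB: "(A,B) \<in> a" "B \<subseteq> Bs a P" "x \<in> A" unfolding Aset_iff by blast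
      obtain y where "y \<in> B" using PX_D(2)[OF a AB(1)] by blast
      then obtain A2 B2 where "(A2,B2) \<in> a" "A2 \<subseteq> P" "y \<in> B2" using AB(2) Bs_iff[of y a P] by blast
      then have "A \<subseteq> P" using uniq[OF AB(1)] \<open>y \<in> B\<close> by blast
      then show "x \<in> P" using AB(3) by blast
    qed
    show "P \<subseteq> Aset a (Bs a P)"
    proof
      fix x assume "x \<in> P"
      then obtain A B where AB: "(A,B) \<in> a" "x \<in> A" "A \<subseteq> P" using covP[of "(P,Q)" x] hab \<open>x \<in> P\<close> by auto
      then have "B \<subseteq> Bs a P" unfolding Bs_def by blast
      then show "x \<in> Aset a (Bs a P)" using AB unfolding Aset_iff by blast
    qed
  qed
  have "(\<lambda>p. (Aset a (fst p), snd p)) ` s = c"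
  proof -
    have "(\<lambda>p. (Aset a (fst p), snd p)) ` s = (\<lambda>p. (Aset a (Bs a (fst p)), snd p)) ` c"
      unfolding s_def image_image by simp
    also have "\<dots> = (\<lambda>p. p) ` c"
    proof (rule image_cong[OF refl])
      fix p assume "p \<in> c"
      then have "(fst p, snd p) \<in> c" by simp
      then show "(Aset a (Bs a (fst p)), snd p) = p" using AB[of "fst p" "snd p"] by simp
    qed
    finally show ?thesis by simp
  qed
  then show ?thesis using eq sS by metis
qed

lemma star_L_cov:
  fixes a c :: "'a bip"
  assumes a: "a \<in> PX X" and c: "c \<in> PX X" and cov: "covr c a"
  shows "\<exists>s\<in>PX X. star X s a = c"
proof -
  define s where "s = (\<lambda>p. (fst p, Bs' a (snd p))) ` c"
  have covP: "\<exists>B D. (B,D) \<in> a \<and> x \<in> D \<and> D \<subseteq> snd p"  if hp: "p \<in> c" "x \<in> snd p" for p x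
  proof -
    have "(fst p, snd p) \<in> c" using hp(1) by simp
    then have "snd p \<in> ran_of c" unfolding ran_of_def by blast
    then obtain D where "D \<in> ran_of a" "x \<in> D" "D \<subseteq> snd p" using cov hp(2) unfolding covr_def by blast
    then show ?thesis unfolding ran_of_def by blast
  qed
  have BsX: "Bs' a P \<subseteq> X" for P unfolding Bs'_def using PX_D(3)[OF a] by blast
  have uniq: "D1 \<subseteq> P" if "(B1,D1) \<in> a" "(B2,D2) \<in> a" "D2 \<subseteq> P" "y \<in> B1" "y \<in> B2" for D1 B1 D2 B2 P y
    using PX_disjA[OF a that(1,2,4,5)] that(3) by blast
  have sS: "s \<in> PX X"
  proof (rule PX_I)
    fix P B' assume "(P,B') \<in> s"
    then obtain p where p: "p \<in> c" "B' = Bs' a (snd p)" "P = fst p" unfolding s_def by force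
    obtain x where "x \<in> snd p" using PX_Dp(2)[OF c p(1)] by blast
    then obtain B D where BD: "(B,D) \<in> a" "D \<subseteq> snd p" using covP[OF p(1)] by blast
    then have "B \<subseteq> B'" using p(2) unfolding Bs'_def by blast
    then have "B' \<noteq> {}" using PX_D(1)[OF a BD(1)] by blast
    then show "P \<noteq> {} \<and> B' \<noteq> {} \<and> P \<subseteq> X \<and> B' \<subseteq> X" using BsX p PX_Dp[OF c p(1)] by simp
  next
    fix P1 B1 P2 B2 x y assume h: "(P1,B1) \<in> s" "(P2,B2) \<in> s" "(x \<in> P1 \<and> x \<in> P2) \<or> (y \<in> B1 \<and> y \<in> B2)"
    obtain p where p: "p \<in> c" "B1 = Bs' a (snd p)" "P1 = fst p" using h(1) unfolding s_def by force
    obtain q where q: "q \<in> c" "B2 = Bs' a (snd q)" "P2 = fst q" using h(2) unfolding s_def by force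
    have "p = q"
    proof (cases "y \<in> B1 \<and> y \<in> B2")
      case True
      then have "y \<in> Bs' a (snd p)" "y \<in> Bs' a (snd q)" using p(2) q(2) by auto
      then obtain C1 D1 C2 D2 where "(C1,D1) \<in> a" "D1 \<subseteq> snd p" "y \<in> C1" "(C2,D2) \<in> a" "D2 \<subseteq> snd q" "y \<in> C2"
        unfolding Bs'_iff by blast
      moreover then have "D1 = D2" using PX_disjA[OF a] by blast
      moreover obtain z where "z \<in> D1" using PX_D(2)[OF a \<open>(C1,D1) \<in> a\<close>] by blast
      ultimately show ?thesis using PX_eqB[OF c p(1) q(1), of z] by blast
    next
      case False
      then have "x \<in> fst p" "x \<in> fst q" using h(3) p q by auto
      then show ?thesis using PX_eqA[OF c p(1) q(1)] by blast
    qed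
    then show "P1 = P2 \<and> B1 = B2" using p q by simp
  qed
  have H1: "\<exists>B1 D1. (B1,D1) \<in> a \<and> y \<in> B1 \<and> B1 \<subseteq> B'" if hh1: "(A,B') \<in> s" "y \<in> B'" for A B' y
  proof -
    obtain p where p: "p \<in> c" "B' = Bs' a (snd p)" using hh1(1) unfolding s_def by force
    obtain B D where "(B,D) \<in> a" "D \<subseteq> snd p" "y \<in> B" using hh1(2) p(2) by (auto simp: Bs'_iff)
    moreover then have "B \<subseteq> B'" using p(2) unfolding Bs'_def by blast
    ultimately show ?thesis by blast
  qed
  have H2: "B \<subseteq> B'" if hh2: "(B,D) \<in> a" "(A,B') \<in> s" "B \<inter> B' \<noteq> {}" for A B B' D
  proof -
    obtain p where p: "p \<in> c" "B' = Bs' a (snd p)" using hh2(2) unfolding s_def by force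
    obtain y where y: "y \<in> B" "y \<in> B'" using hh2(3) by blast
    obtain B2 D2 where "(B2,D2) \<in> a" "D2 \<subseteq> snd p" "y \<in> B2" using y(2) p(2) by (auto simp: Bs'_iff)
    then have "D \<subseteq> snd p" using uniq[OF hh2(1)] y(1) by blast
    then show ?thesis using hh2(1) p(2) unfolding Bs'_def by blast
  qed
  have eq: "star X s a = (\<lambda>p. (fst p, Dset a (snd p))) ` s"
    by (rule star_gen_L[OF sS a H1 H2])
  have AB: "Dset a (Bs' a Q) = Q" if hab: "(P,Q) \<in> c" for P Q
  proof
    show "Dset a (Bs' a Q) \<subseteq> Q"
    proof
      fix x assume "x \<in> Dset a (Bs' a Q)"
      then obtain B D where BD: "(B,D) \<in> a" "B \<subseteq> Bs' a Q" "x \<in> D" unfolding Dset_iff by blast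
      obtain y where "y \<in> B" using PX_D(1)[OF a BD(1)] by blast
      then obtain B2 D2 where "(B2,D2) \<in> a" "D2 \<subseteq> Q" "y \<in> B2" using BD(2) Bs'_iff[of y a Q] by blast
      then have "D \<subseteq> Q" using uniq[OF BD(1)] \<open>y \<in> B\<close> by blast
      then show "x \<in> Q" using BD(3) by blast
    qed
    show "Q \<subseteq> Dset a (Bs' a Q)"
    proof
      fix x assume "x \<in> Q"
      then obtain B D where BD: "(B,D) \<in> a" "x \<in> D" "D \<subseteq> Q" using covP[of "(P,Q)" x] hab \<open>x \<in> Q\<close> by auto
      then have "B \<subseteq> Bs' a Q" unfolding Bs'_def by blast
      then show "x \<in> Dset a (Bs' a Q)" using BD unfolding Dset_iff by blast
    qed
  qed
  have "(\<lambda>p. (fst p, Dset a (snd p))) ` s = c"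
  proof -
    have "(\<lambda>p. (fst p, Dset a (snd p))) ` s = (\<lambda>p. (fst p, Dset a (Bs' a (snd p)))) ` c"
      unfolding s_def image_image by simp
    also have "\<dots> = (\<lambda>p. p) ` c"
    proof (rule image_cong[OF refl])
      fix p assume "p \<in> c"
      then have "(fst p, snd p) \<in> c" by simp
      then show "(fst p, Dset a (Bs' a (snd p))) = p" using AB[of "fst p" "snd p"] by simp
    qed
    finally show ?thesis by simp
  qed
  then show ?thesis using eq sS by metis
qed

lemma covd_sub_dom: "dom_of c \<subseteq> dom_of a \<Longrightarrow> covd c a"
  unfolding covd_def by blast
lemma covr_sub_ran: "ran_of c \<subseteq> ran_of a \<Longrightarrow> covr c a"
  unfolding covr_def by blast

lemma covd_star:
  assumes b: "b \<in> PX X" and d: "dom_of a = dom_of b"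
  shows "covd (star X b t) a"
  unfolding covd_def d
proof (intro ballI)
  fix P x assume "P \<in> dom_of (star X b t)" "x \<in> P"
  then obtain Q where "(P,Q) \<in> star X b t" unfolding dom_of_def by blast
  then obtain A B where "(A,B)\<in>b" "x\<in>A" "A \<subseteq> P" using star_fst[OF b] \<open>x \<in> P\<close> by blast
  then show "\<exists>A\<in>dom_of b. x \<in> A \<and> A \<subseteq> P" unfolding dom_of_def by blast
qed

lemma covr_star:
  assumes b: "b \<in> PX X" and d: "ran_of a = ran_of b"
  shows "covr (star X t b) a"
  unfolding covr_def d
proof (intro ballI)
  fix P x assume "P \<in> ran_of (star X t b)" "x \<in> P"
  then obtain Q where "(Q,P) \<in> star X t b" unfolding ran_of_def by blast
  then obtain A B where "(B,A)\<in>b" "x\<in>A" "A \<subseteq> P" using star_snd[OF b] \<open>x \<in> P\<close> by blast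
  then show "\<exists>A\<in>ran_of b. x \<in> A \<and> A \<subseteq> P" unfolding ran_of_def by blast
qed

lemma good_star: "good X (star X)"
  unfolding good_def
proof (intro conjI ballI allI impI)
  fix \<alpha> \<beta> assume "\<alpha> \<in> PX X" "\<beta> \<in> PX X"
  then show "star X \<alpha> \<beta> \<in> PX X" by (rule star_PX)
next
  fix \<alpha> \<beta> P Q x assume "\<alpha> \<in> PX X" "\<beta> \<in> PX X" "(P,Q) \<in> star X \<alpha> \<beta>" "x \<in> P"
  then show "\<exists>A B. (A,B)\<in>\<alpha> \<and> x\<in>A \<and> A \<subseteq> P" using star_fst by metis
next
  fix \<alpha> \<beta> P Q z assume "\<alpha> \<in> PX X" "\<beta> \<in> PX X" "(P,Q) \<in> star X \<alpha> \<beta>" "z \<in> Q"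
  then show "\<exists>B D. (B,D)\<in>\<beta> \<and> z\<in>D \<and> D \<subseteq> Q" using star_snd by metis
next
  fix a b t assume h: "a \<in> PX X" "b \<in> PX X" "t \<in> PX X" "dom_of a = dom_of b"
  show "\<exists>s\<in>PX X. star X a s = star X b t"
    using star_R_cov[OF h(1) star_PX[OF h(2,3)] covd_star[OF h(2,4)]] .
next
  fix a b t assume h: "a \<in> PX X" "b \<in> PX X" "t \<in> PX X" "ran_of a = ran_of b"
  show "\<exists>s\<in>PX X. star X s a = star X t b"
    using star_L_cov[OF h(1) star_PX[OF h(3,2)] covr_star[OF h(2,4)]] .
next
  fix a c assume h: "a \<in> PX X" "c \<in> PX X" "dom_of c \<subseteq> dom_of a"
  show "\<exists>s\<in>PX X. star X a s = c" using star_R_cov[OF h(1,2) covd_sub_dom[OF h(3)]] .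
next
  fix a c assume h: "a \<in> PX X" "c \<in> PX X" "ran_of c \<subseteq> ran_of a"
  show "\<exists>s\<in>PX X. star X s a = c" using star_L_cov[OF h(1,2) covr_sub_ran[OF h(3)]] .
qed

lemma good_circ: "good X circ"
  unfolding good_def
proof (intro conjI ballI allI impI)
  fix \<alpha> \<beta> assume "\<alpha> \<in> PX X" "\<beta> \<in> PX X"
  then show "circ \<alpha> \<beta> \<in> PX X" by (rule circ_PX)
next
  fix \<alpha> \<beta> P Q x assume "(P,Q) \<in> circ \<alpha> \<beta>" "x \<in> P"
  then show "\<exists>A B. (A,B)\<in>\<alpha> \<and> x\<in>A \<and> A \<subseteq> P" unfolding circ_def by blast
next
  fix \<alpha> \<beta> P Q z assume "(P,Q) \<in> circ \<alpha> \<beta>" "z \<in> Q"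
  then show "\<exists>B D. (B,D)\<in>\<beta> \<and> z\<in>D \<and> D \<subseteq> Q" unfolding circ_def by blast
next
  fix a b t assume h: "a \<in> PX X" "b \<in> PX X" "t \<in> PX X" "dom_of a = dom_of b"
  have "dom_of (circ b t) \<subseteq> dom_of a" using h(4) unfolding dom_of_def circ_def by blast
  then show "\<exists>s\<in>PX X. circ a s = circ b t" using circ_R[OF h(1) circ_PX[OF h(2,3)]] by blast
next
  fix a b t assume h: "a \<in> PX X" "b \<in> PX X" "t \<in> PX X" "ran_of a = ran_of b"
  have "ran_of (circ t b) \<subseteq> ran_of a" using h(4) unfolding ran_of_def circ_def by blast
  then show "\<exists>s\<in>PX X. circ s a = circ t b" using circ_L[OF h(1) circ_PX[OF h(3,2)]] by blast
next
  fix a c assume h: "a \<in> PX X" "c \<in> PX X" "dom_of c \<subseteq> dom_of a"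
  show "\<exists>s\<in>PX X. circ a s = c" using circ_R[OF h(1,2,3)] .
next
  fix a c assume h: "a \<in> PX X" "c \<in> PX X" "ran_of c \<subseteq> ran_of a"
  show "\<exists>s\<in>PX X. circ s a = c" using circ_L[OF h(1,2,3)] .
qed

theorem mainTheorem2:
  fixes X :: "'a set" and mult :: "'a bip \<Rightarrow> 'a bip \<Rightarrow> 'a bip"
  assumes "mult = star X \<or> mult = circ"
  shows "(\<forall>a\<in>PX X. \<forall>b\<in>PX X. greenR (PX X) mult a b \<longleftrightarrow> dom_of a = dom_of b)
       \<and> (\<forall>a\<in>PX X. \<forall>b\<in>PX X. greenL (PX X) mult a b \<longleftrightarrow> ran_of a = ran_of b)
       \<and> (\<forall>a\<in>PX X. \<forall>b\<in>PX X.
            (greenD (PX X) mult a b \<longleftrightarrow> greenJ (PX X) mult a b)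
          \<and> (greenJ (PX X) mult a b \<longleftrightarrow> (rank_of a, rank_of b) \<in> ordIso))
       \<and> (\<forall>I. is_ideal (PX X) mult I \<longrightarrow>
            (\<exists>\<xi> :: 'a set rel. Card_order \<xi> \<and> (\<xi>, cardSuc (card_of X)) \<in> ordLeq \<and>
               I = {\<alpha>\<in>PX X. (rank_of \<alpha>, \<xi>) \<in> ordLess}))"
proof -
  have "good X mult" using assms good_star good_circ by metis
  then show ?thesis by (rule main_good)
qed


end
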